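(* Let $(J,R,\sigma)$ be a generalized complex structure of type $1$ on a real $4$-dimensional unimodular Lie algebra $\mathfrak g$. Then there exist a basis $(e_1,e_2,e_3,e_4)$ of $\mathfrak g$ and $\lambda\in\mathbb R$ such that $J=\lambda(E_{11}+E_{22})+E_{34}-E_{43}$, $R=e_{12}^\#$, $\sigma=(1+\lambda^2)e^{12}_\#$, and the nonvanishing Lie brackets have one of the following forms (all parameters real): $\mathfrak U_1$: $[e_1,e_2]=e_1$, $[e_2,e_3]=\tfrac12e_3-ye_4-q_1e_1$, $[e_2,e_4]=ye_3+\tfrac12e_4-q_2e_1$; $\mathfrak U_2$: $[e_3,e_4]=b_1e_1+b_2e_2$, $[e_2,e_3]=-ye_4-q_1e_1$, $[e_2,e_4]=ye_3-q_2e_1$; $\mathfrak U_3$: $[e_3,e_4]=b_1e_1+b_2e_2$, $[e_4,e_1]=pe_1+re_2$, $[e_4,e_2]=qe_1-pe_2$, with $|p^2+qr|\in\{0,1\}$.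
   Context: Let $\mathfrak g$ be a real finite-dimensional Lie algebra, $\Phi(\mathfrak g)=\mathfrak g\oplus\mathfrak g^*$ with the neutral pairing $\langle u+\alpha,v+\beta\rangle=\tfrac12(\alpha(v)+\beta(u))$ and the bracket $[u+\alpha,v+\beta]=[u,v]+\mathrm{ad}_u^t\beta-\mathrm{ad}_v^t\alpha$, where $(\mathrm{ad}_u^t\alpha)(v)=-\alpha([u,v])$. A generalized complex structure on $\mathfrak g$ is an endomorphism $K$ of $\Phi(\mathfrak g)$ with $K^2=-\mathrm{Id}$, $\langle Ka,b\rangle+\langle a,Kb\rangle=0$ for all $a,b$, and vanishing Nijenhuis torsion $N_K(a,b)=[Ka,Kb]-K[Ka,b]-K[a,Kb]+K^2[a,b]$. Writing $K=\begin{pmatrix}J&R\\ \sigma&-J^*\end{pmatrix}$ with skew-symmetric $R:\mathfrak g^*\to\mathfrak g$, $\sigma:\mathfrak g\to\mathfrak g^*$, the triple $(J,R,\sigma)$ is called a generalized complex structure on $\mathfrak g$; in dimension 4 it is of type $1$ if $\operatorname{rank}R=2$. A Lie algebra is unimodular if $\operatorname{tr}\mathrm{ad}_u=0$ for all $u$. Notation: $E_{ij}$ sends $e_j$ to $e_i$ and kills $e_k$, $k\neq j$; for $\pi\in\wedge^2\mathfrak g$, $\pi^\#:\mathfrak g^*\to\mathfrak g$ is $\beta(\pi^\#\alpha)=\pi(\alpha,\beta)$; for $\omega\in\wedge^2\mathfrak g^*$, $\omega_\#(u)=i_u\omega$; $e_{12}^\#=(e_1\wedge e_2)^\#$, $e^{12}_\#=(e^1\wedge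 e^2)_\#$ with $(e^i)$ the dual basis. *)

theory Defs
  imports "HOL-Analysis.Analysis"
begin

definition lie_algebra :: "('a::real_vector \<Rightarrow> 'a \<Rightarrow> 'a) \<Rightarrow> bool" where
  "lie_algebra br \<longleftrightarrow> bilinear br \<and> (\<forall>u. br u u = 0) \<and>
     (\<forall>u v w. br u (br v w) + br v (br w u) + br w (br u v) = 0)"

definition lin_trace :: "('a::euclidean_space \<Rightarrow> 'a) \<Rightarrow> real" where
  "lin_trace f = (\<Sum>b\<in>Basis. f b \<bullet> b)"

definition unimodular :: "('a::euclidean_space \<Rightarrow> 'a \<Rightarrow> 'a) \<Rightarrow> bool" where
  "unimodular br \<longleftrightarrow> (\<forall>u. lin_trace (br u) = 0)"

definition dual_space :: "('a::real_vector \<Rightarrow> real) set" where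
  "dual_space = {\<alpha>. linear \<alpha>}"

definition Phi :: "('a::real_vector \<times> ('a \<Rightarrow> real)) set" where
  "Phi = UNIV \<times> dual_space"

definition phi_pair :: "('a \<times> ('a \<Rightarrow> real)) \<Rightarrow> ('a \<times> ('a \<Rightarrow> real)) \<Rightarrow> real" where
  "phi_pair a b = (snd a (fst b) + snd b (fst a)) / 2"

definition ad_t :: "('a \<Rightarrow> 'a \<Rightarrow> 'a) \<Rightarrow> 'a \<Rightarrow> ('a \<Rightarrow> real) \<Rightarrow> ('a \<Rightarrow> real)" where
  "ad_t br u \<alpha> = (\<lambda>v. - \<alpha> (br u v))"

definition phi_bracket :: "('a::real_vector \<Rightarrow> 'a \<Rightarrow> 'a) \<Rightarrow> ('a \<times> ('a \<Rightarrow> real)) \<Rightarrow> ('a \<times> ('a \<Rightarrow> real)) \<Rightarrow> ('a \<times> ('a \<Rightarrow> real))" where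
  "phi_bracket br a b = (br (fst a) (fst b),
      \<lambda>w. ad_t br (fst a) (snd b) w - ad_t br (fst b) (snd a) w)"

text \<open>K = [[J, R], [sigma, -J^*]] acting on u + alpha.\<close>
definition gc_K :: "('a::real_vector \<Rightarrow> 'a) \<Rightarrow> (('a \<Rightarrow> real) \<Rightarrow> 'a) \<Rightarrow> ('a \<Rightarrow> ('a \<Rightarrow> real))
    \<Rightarrow> ('a \<times> ('a \<Rightarrow> real)) \<Rightarrow> ('a \<times> ('a \<Rightarrow> real))" where
  "gc_K J R \<sigma> a = (J (fst a) + R (snd a), \<lambda>w. \<sigma> (fst a) w - snd a (J w))"

definition nijenhuis :: "('a::real_vector \<Rightarrow> 'a \<Rightarrow> 'a) \<Rightarrow> (('a \<times> ('a \<Rightarrow> real)) \<Rightarrow> ('a \<times> ('a \<Rightarrow> real)))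
    \<Rightarrow> ('a \<times> ('a \<Rightarrow> real)) \<Rightarrow> ('a \<times> ('a \<Rightarrow> real)) \<Rightarrow> ('a \<times> ('a \<Rightarrow> real))" where
  "nijenhuis br K a b =
     (let x1 = phi_bracket br (K a) (K b);
          x2 = K (phi_bracket br (K a) b);
          x3 = K (phi_bracket br a (K b));
          x4 = K (K (phi_bracket br a b))
      in (fst x1 - fst x2 - fst x3 + fst x4, \<lambda>w. snd x1 w - snd x2 w - snd x3 w + snd x4 w))"

definition gen_complex_structure ::
  "('a::real_vector \<Rightarrow> 'a \<Rightarrow> 'a) \<Rightarrow> ('a \<Rightarrow> 'a) \<Rightarrow> (('a \<Rightarrow> real) \<Rightarrow> 'a) \<Rightarrow> ('a \<Rightarrow> ('a \<Rightarrow> real)) \<Rightarrow> bool" where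
  "gen_complex_structure br J R \<sigma> \<longleftrightarrow>
     linear J \<and>
     (\<forall>\<alpha>\<in>dual_space. \<forall>\<beta>\<in>dual_space. \<forall>s t::real.
        R (\<lambda>w. s * \<alpha> w + t * \<beta> w) = s *\<^sub>R R \<alpha> + t *\<^sub>R R \<beta>) \<and>
     (\<forall>u. \<sigma> u \<in> dual_space) \<and>
     (\<forall>u v. \<forall>s t::real. \<sigma> (s *\<^sub>R u + t *\<^sub>R v) = (\<lambda>w. s * \<sigma> u w + t * \<sigma> v w)) \<and>
     (\<forall>\<alpha>\<in>dual_space. \<forall>\<beta>\<in>dual_space. \<beta> (R \<alpha>) = - \<alpha> (R \<beta>)) \<and>
     (\<forall>u v. \<sigma> u v = - \<sigma> v u) \<and>
     (\<forall>a\<in>Phi. gc_K J R \<sigma> (gc_K J R \<sigma> a) = (- fst a, \<lambda>w. - snd a w)) \<and>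
     (\<forall>a\<in>Phi. \<forall>b\<in>Phi. phi_pair (gc_K J R \<sigma> a) b + phi_pair a (gc_K J R \<sigma> b) = 0) \<and>
     (\<forall>a\<in>Phi. \<forall>b\<in>Phi. nijenhuis br (gc_K J R \<sigma>) a b = (0, \<lambda>w. 0))"

definition rank_R :: "(('a::real_vector \<Rightarrow> real) \<Rightarrow> 'a) \<Rightarrow> nat" where
  "rank_R R = dim (R ` dual_space)"

end

theory Submission
  imports Defs
begin

definition indep4 :: "'a::real_vector \<Rightarrow> 'a \<Rightarrow> 'a \<Rightarrow> 'a \<Rightarrow> bool" where
  "indep4 e1 e2 e3 e4 \<longleftrightarrow> (\<forall>x1 x2 x3 x4. x1 *\<^sub>R e1 + x2 *\<^sub>R e2 + x3 *\<^sub>R e3 + x4 *\<^sub>R e4 = 0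
       \<longrightarrow> x1 = 0 \<and> x2 = 0 \<and> x3 = 0 \<and> x4 = 0)"

lemma indep4D:
  assumes "indep4 e1 e2 e3 e4" "x1 *\<^sub>R e1 + x2 *\<^sub>R e2 + x3 *\<^sub>R e3 + x4 *\<^sub>R e4 = 0"
  shows "x1 = 0" "x2 = 0" "x3 = 0" "x4 = 0"
  using assms unfolding indep4_def by blast+

lemma basis_crit:
  fixes e1 :: "'a::euclidean_space"
  assumes d: "DIM('a) = 4" and I: "indep4 e1 e2 e3 e4"
  shows "distinct [e1, e2, e3, e4] \<and> independent {e1, e2, e3, e4} \<and> span {e1, e2, e3, e4} = UNIV"
proof -
  have D: "distinct [e1, e2, e3, e4]"
  proof -
    have "e1 \<noteq> e2" using indep4D(1)[OF I, of 1 "-1" 0 0] by auto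
    moreover have "e1 \<noteq> e3" using indep4D(1)[OF I, of 1 0 "-1" 0] by auto
    moreover have "e1 \<noteq> e4" using indep4D(1)[OF I, of 1 0 0 "-1"] by auto
    moreover have "e2 \<noteq> e3" using indep4D(2)[OF I, of 0 1 "-1" 0] by auto
    moreover have "e2 \<noteq> e4" using indep4D(2)[OF I, of 0 1 0 "-1"] by auto
    moreover have "e3 \<noteq> e4" using indep4D(3)[OF I, of 0 0 1 "-1"] by auto
    ultimately show ?thesis by auto
  qed
  have n4: "e4 \<noteq> 0" using indep4D(4)[OF I, of 0 0 0 1] by auto
  have s3: "e3 \<notin> span {e4}"
  proof
    assume "e3 \<in> span {e4}"
    then obtain k where "e3 = k *\<^sub>R e4" by (auto simp: span_singleton)
    then show False using indep4D(3)[OF I, of 0 0 1 "-k"] by auto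
  qed
  have s2: "e2 \<notin> span {e3, e4}"
  proof
    assume "e2 \<in> span {e3, e4}"
    then obtain k3 k4 where "e2 = k3 *\<^sub>R e3 + k4 *\<^sub>R e4"
      by (auto simp: span_insert span_singleton) (metis add.commute diff_add_cancel)
    then show False using indep4D(2)[OF I, of 0 1 "-k3" "-k4"] by auto
  qed
  have s1: "e1 \<notin> span {e2, e3, e4}"
  proof
    assume "e1 \<in> span {e2, e3, e4}"
    then obtain k2 k3 k4 where "e1 = k2 *\<^sub>R e2 + k3 *\<^sub>R e3 + k4 *\<^sub>R e4"
      apply (auto simp: span_insert span_singleton)
      by (metis add.commute diff_add_cancel add.assoc)
    then show False using indep4D(1)[OF I, of 1 "-k2" "-k3" "-k4"] by (auto simp: algebra_simps)
  qed
  have Ind: "independent {e1, e2, e3, e4}"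
    using n4 s1 s2 s3 by (intro independent_insertI) (auto intro: independent_insertI simp: independent_empty)
  have "card {e1, e2, e3, e4} = 4" using D by auto
  then have "dim (span {e1, e2, e3, e4}) = DIM('a)" using dim_span_eq_card_independent[OF Ind] d by simp
  then have "span {e1, e2, e3, e4} = UNIV" using dim_eq_full by (metis dim_span)
  then show ?thesis using D Ind by blast
qed

lemma dual_exists:
  fixes e1 :: "'a::euclidean_space"
  assumes d: "DIM('a) = 4" and I: "indep4 e1 e2 e3 e4"
  obtains d1 d2 d3 d4 :: "'a \<Rightarrow> real" where
    "linear d1" "linear d2" "linear d3" "linear d4"
    "d1 e1 = 1" "d1 e2 = 0" "d1 e3 = 0" "d1 e4 = 0"
    "d2 e1 = 0" "d2 e2 = 1" "d2 e3 = 0" "d2 e4 = 0"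
    "d3 e1 = 0" "d3 e2 = 0" "d3 e3 = 1" "d3 e4 = 0"
    "d4 e1 = 0" "d4 e2 = 0" "d4 e3 = 0" "d4 e4 = 1"
    "\<And>x. x = d1 x *\<^sub>R e1 + d2 x *\<^sub>R e2 + d3 x *\<^sub>R e3 + d4 x *\<^sub>R e4"
proof -
  from basis_crit[OF d I] have D: "distinct [e1, e2, e3, e4]" and Ind: "independent {e1, e2, e3, e4}"
    and Sp: "span {e1, e2, e3, e4} = UNIV" by auto
  have ne: "e1 \<noteq> e2" "e1 \<noteq> e3" "e1 \<noteq> e4" "e2 \<noteq> e3" "e2 \<noteq> e4" "e3 \<noteq> e4"
    "e2 \<noteq> e1" "e3 \<noteq> e1" "e4 \<noteq> e1" "e3 \<noteq> e2" "e4 \<noteq> e2" "e4 \<noteq> e3" using D by auto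
  have ex: "\<exists>g. linear g \<and> (\<forall>x\<in>{e1, e2, e3, e4}. g x = (if x = v then 1 else (0::real)))" for v
    using linear_independent_extend[OF Ind, of "\<lambda>x. if x = v then 1 else (0::real)"] by simp
  obtain d1 where d1: "linear d1" "\<forall>x\<in>{e1, e2, e3, e4}. d1 x = (if x = e1 then 1 else (0::real))" using ex by blast
  obtain d2 where d2: "linear d2" "\<forall>x\<in>{e1, e2, e3, e4}. d2 x = (if x = e2 then 1 else (0::real))" using ex by blast
  obtain d3 where d3: "linear d3" "\<forall>x\<in>{e1, e2, e3, e4}. d3 x = (if x = e3 then 1 else (0::real))" using ex by blast
  obtain d4 where d4: "linear d4" "\<forall>x\<in>{e1, e2, e3, e4}. d4 x = (if x = e4 then 1 else (0::real))" using ex by blast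
  have exp: "x = d1 x *\<^sub>R e1 + d2 x *\<^sub>R e2 + d3 x *\<^sub>R e3 + d4 x *\<^sub>R e4" for x
  proof -
    have "x \<in> span {e1, e2, e3, e4}" using Sp by auto
    then obtain k1 k2 k3 k4 where k: "x = k1 *\<^sub>R e1 + k2 *\<^sub>R e2 + k3 *\<^sub>R e3 + k4 *\<^sub>R e4"
      apply (auto simp: span_insert span_singleton)
      by (metis add.commute diff_add_cancel add.assoc)
    have l1: "d1 x = k1" using ne d1 unfolding k by (simp add: linear_add linear_scale)
    have l2: "d2 x = k2" using ne d2 unfolding k by (simp add: linear_add linear_scale)
    have l3: "d3 x = k3" using ne d3 unfolding k by (simp add: linear_add linear_scale)
    have l4: "d4 x = k4" using ne d4 unfolding k by (simp add: linear_add linear_scale)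
    show ?thesis using k l1 l2 l3 l4 by simp
  qed
  show ?thesis
    apply (rule that[OF d1(1) d2(1) d3(1) d4(1)])
    using ne d1(2) d2(2) d3(2) d4(2) exp by auto
qed

lemma lin0: "linear (\<lambda>w::'a::real_vector. 0::real)" by (simp add: linear_zero)

lemma gcs_facts:
  fixes J :: "'a::real_vector \<Rightarrow> 'a"
  assumes G: "gen_complex_structure br J R \<sigma>"
  shows "linear J"
    and Rlin: "\<And>\<alpha> \<beta> s t. linear \<alpha> \<Longrightarrow> linear \<beta> \<Longrightarrow> R (\<lambda>w. s * \<alpha> w + t * \<beta> w) = s *\<^sub>R R \<alpha> + t *\<^sub>R R \<beta>"
    and "\<And>u. linear (\<sigma> u)"
    and slin: "\<And>u v s t. \<sigma> (s *\<^sub>R u + t *\<^sub>R v) = (\<lambda>w. s * \<sigma> u w + t * \<sigma> v w)"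
    and "\<And>\<alpha> \<beta>. linear \<alpha> \<Longrightarrow> linear \<beta> \<Longrightarrow> \<beta> (R \<alpha>) = - \<alpha> (R \<beta>)"
    and "\<And>u v. \<sigma> u v = - \<sigma> v u"
    and R0: "R (\<lambda>w. 0) = 0"
    and s0: "\<sigma> 0 = (\<lambda>w. 0)"
    and K1: "\<And>u. J (J u) + R (\<sigma> u) = - u"
    and K2: "\<And>\<alpha>. linear \<alpha> \<Longrightarrow> J (R \<alpha>) = R (\<lambda>w. \<alpha> (J w))"
    and K3: "\<And>u w. \<sigma> (J u) w = \<sigma> u (J w)"
    and Rneg: "\<And>\<alpha>. linear \<alpha> \<Longrightarrow> R (\<lambda>w. - \<alpha> w) = - R \<alpha>"
proof -
  note G' = G[unfolded gen_complex_structure_def dual_space_def Phi_def mem_Collect_eq]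
  show LJ: "linear J" using G' by blast
  show RL: "\<And>\<alpha> \<beta> s t. linear \<alpha> \<Longrightarrow> linear \<beta> \<Longrightarrow> R (\<lambda>w. s * \<alpha> w + t * \<beta> w) = s *\<^sub>R R \<alpha> + t *\<^sub>R R \<beta>"
    using G' by blast
  show "\<And>u. linear (\<sigma> u)" using G' by blast
  show SL: "\<And>u v s t. \<sigma> (s *\<^sub>R u + t *\<^sub>R v) = (\<lambda>w. s * \<sigma> u w + t * \<sigma> v w)" using G' by blast
  show "\<And>\<alpha> \<beta>. linear \<alpha> \<Longrightarrow> linear \<beta> \<Longrightarrow> \<beta> (R \<alpha>) = - \<alpha> (R \<beta>)" using G' by blast
  show "\<And>u v. \<sigma> u v = - \<sigma> v u" using G' by blast
  show R0: "R (\<lambda>w. 0) = 0" using RL[OF lin0 lin0, of 0 0] by simp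
  show s0: "\<sigma> 0 = (\<lambda>w. 0)" using SL[of 0 0 0 0] by simp
  have J0: "J 0 = 0" using LJ linear_0 by blast
  have KK: "\<And>a. a \<in> UNIV \<times> {\<alpha>. linear \<alpha>} \<Longrightarrow> gc_K J R \<sigma> (gc_K J R \<sigma> a) = (- fst a, \<lambda>w. - snd a w)"
    using G' by blast
  show K1: "\<And>u. J (J u) + R (\<sigma> u) = - u"
  proof -
    fix u
    have "gc_K J R \<sigma> (gc_K J R \<sigma> (u, \<lambda>w. 0)) = (- u, \<lambda>w. - 0)" using KK[of "(u, \<lambda>w. 0)"] lin0 by simp
    then show "J (J u) + R (\<sigma> u) = - u" by (simp add: gc_K_def R0)
  qed
  show RN: "\<And>\<alpha>. linear \<alpha> \<Longrightarrow> R (\<lambda>w. - \<alpha> w) = - R \<alpha>"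
    using RL[OF _ lin0, of _ "-1" 0] by simp
  show "\<And>\<alpha>. linear \<alpha> \<Longrightarrow> J (R \<alpha>) = R (\<lambda>w. \<alpha> (J w))"
  proof -
    fix \<alpha> :: "'a \<Rightarrow> real" assume la: "linear \<alpha>"
    have lj: "linear (\<lambda>w. \<alpha> (J w))" using la LJ by (simp add: linear_compose[unfolded o_def])
    have "gc_K J R \<sigma> (gc_K J R \<sigma> (0, \<alpha>)) = (- 0, \<lambda>w. - \<alpha> w)" using KK[of "(0, \<alpha>)"] la by simp
    then have "J (R \<alpha>) + R (\<lambda>w. - \<alpha> (J w)) = 0" by (simp add: gc_K_def J0 s0)
    then show "J (R \<alpha>) = R (\<lambda>w. \<alpha> (J w))" using RN[OF lj] by simp
  qed
  show "\<And>u w. \<sigma> (J u) w = \<sigma> u (J w)"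
  proof -
    fix u w
    have "gc_K J R \<sigma> (gc_K J R \<sigma> (u, \<lambda>w. 0)) = (- u, \<lambda>w. - 0)" using KK[of "(u, \<lambda>w. 0)"] lin0 by simp
    then have "(\<lambda>w. \<sigma> (J u) w - \<sigma> u (J w)) = (\<lambda>w. 0)" by (simp add: gc_K_def R0)
    then show "\<sigma> (J u) w = \<sigma> u (J w)" by (metis right_minus_eq)
  qed
qed

definition good :: "('a::real_vector \<Rightarrow> 'a) \<Rightarrow> (('a \<Rightarrow> real) \<Rightarrow> 'a) \<Rightarrow> ('a \<Rightarrow> 'a \<Rightarrow> real) \<Rightarrow> 'a \<Rightarrow> 'a \<Rightarrow> 'a \<Rightarrow> 'a \<Rightarrow> real \<Rightarrow> bool" where
  "good J R \<sigma> e1 e2 e3 e4 lam \<longleftrightarrow> indep4 e1 e2 e3 e4 \<and>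
    J e1 = lam *\<^sub>R e1 \<and> J e2 = lam *\<^sub>R e2 \<and> J e3 = - e4 \<and> J e4 = e3 \<and>
    (\<forall>\<alpha>\<in>dual_space. R \<alpha> = \<alpha> e1 *\<^sub>R e2 - \<alpha> e2 *\<^sub>R e1) \<and>
    \<sigma> e1 e1 = 0 \<and> \<sigma> e1 e2 = 1 + lam\<^sup>2 \<and> \<sigma> e1 e3 = 0 \<and> \<sigma> e1 e4 = 0 \<and>
    \<sigma> e2 e1 = - (1 + lam\<^sup>2) \<and> \<sigma> e2 e2 = 0 \<and> \<sigma> e2 e3 = 0 \<and> \<sigma> e2 e4 = 0 \<and>
    \<sigma> e3 e1 = 0 \<and> \<sigma> e3 e2 = 0 \<and> \<sigma> e3 e3 = 0 \<and> \<sigma> e3 e4 = 0 \<and>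
    \<sigma> e4 e1 = 0 \<and> \<sigma> e4 e2 = 0 \<and> \<sigma> e4 e3 = 0 \<and> \<sigma> e4 e4 = 0"

lemma dual_rep:
  fixes \<alpha> :: "'a::euclidean_space \<Rightarrow> real"
  assumes "linear \<alpha>"
  shows "\<alpha> = (\<lambda>w. (\<Sum>b\<in>Basis. \<alpha> b *\<^sub>R b) \<bullet> w)"
proof
  fix w
  have "\<alpha> w = \<alpha> (\<Sum>b\<in>Basis. (w \<bullet> b) *\<^sub>R b)" by (simp add: euclidean_representation)
  also have "\<dots> = (\<Sum>b\<in>Basis. (w \<bullet> b) * \<alpha> b)" using assms by (simp add: linear_sum linear_scale)
  also have "\<dots> = (\<Sum>b\<in>Basis. \<alpha> b * (b \<bullet> w))" by (rule sum.cong) (auto simp: inner_commute)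
  also have "\<dots> = (\<Sum>b\<in>Basis. \<alpha> b *\<^sub>R b) \<bullet> w" by (simp add: inner_sum_left)
  finally show "\<alpha> w = (\<Sum>b\<in>Basis. \<alpha> b *\<^sub>R b) \<bullet> w" .
qed

lemma linear_inner: "linear (\<lambda>w. x \<bullet> (w::'a::real_inner))"
  by (simp add: bounded_linear.linear bounded_linear_inner_right)

lemma linear_inner_comp: "linear J \<Longrightarrow> linear (\<lambda>w. x \<bullet> (J w::'a::real_inner))"
  using linear_compose[OF _ linear_inner, of J x] by (simp add: o_def)

lemma linear_comp': "linear (J::'a::real_vector\<Rightarrow>'b::real_vector) \<Longrightarrow> linear (\<alpha>::'b\<Rightarrow>real) \<Longrightarrow> linear (\<lambda>w. \<alpha> (J w))"
  using linear_compose[of J \<alpha>] by (simp add: o_def)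

lemma good_exists:
  fixes J :: "'a::euclidean_space \<Rightarrow> 'a"
  assumes d: "DIM('a) = 4" and G: "gen_complex_structure br J R \<sigma>" and rk: "rank_R R = 2"
  shows "\<exists>e1 e2 e3 e4 lam. good J R \<sigma> e1 e2 e3 e4 lam"
proof -
  note F = gcs_facts[OF G]
  have LJ: "linear J" by (rule F(1))
  define r where "r x = R (\<lambda>w. x \<bullet> w)" for x
  have rlin: "linear r"
  proof (rule linearI)
    fix x y show "r (x + y) = r x + r y"
      using F(2)[OF linear_inner linear_inner, of 1 x 1 y] by (simp add: r_def inner_add_left)
  next
    fix c x show "r (c *\<^sub>R x) = c *\<^sub>R r x"
      using F(2)[OF linear_inner linear_inner, of c x 0 x] by (simp add: r_def)
  qed
  have Rr: "R \<alpha> = r (\<Sum>b\<in>Basis. \<alpha> b *\<^sub>R b)" if "linear \<alpha>" for \<alpha>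
    using arg_cong[OF dual_rep[OF that], of R] unfolding r_def .
  have Vr: "R ` dual_space = range r"
  proof
    show "R ` dual_space \<subseteq> range r" using Rr by (auto simp: dual_space_def)
    show "range r \<subseteq> R ` dual_space" unfolding r_def dual_space_def using linear_inner by auto
  qed
  have skew: "y \<bullet> r x = - (x \<bullet> r y)" for x y
  proof -
    have "(\<lambda>w. y \<bullet> w) (R (\<lambda>w. x \<bullet> w)) = - (\<lambda>w. x \<bullet> w) (R (\<lambda>w. y \<bullet> w))"
      by (rule F(5)) (rule linear_inner)+
    then show ?thesis unfolding r_def by simp
  qed
  have dimV: "dim (range r) = 2" using rk Vr by (simp add: rank_R_def)
  have subV: "subspace (range r)" using rlin by (simp add: linear_subspace_image)
  obtain B where B: "B \<subseteq> range r" "pairwise orthogonal B" "\<And>x. x \<in> B \<Longrightarrow> norm x = 1"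
      "independent B" "card B = dim (range r)" "span B = range r"
    using orthonormal_basis_subspace[OF subV] by blast
  obtain f1 f2 where f12: "B = {f1, f2}" "f1 \<noteq> f2" using B(5) dimV card_2_iff by metis
  have o12: "f1 \<bullet> f2 = 0" using B(2) f12 by (auto simp: pairwise_def orthogonal_def)
  have o21: "f2 \<bullet> f1 = 0" using o12 by (simp add: inner_commute)
  have n1: "f1 \<bullet> f1 = 1" using B(3)[of f1] f12 by (simp add: norm_eq_1)
  have n2: "f2 \<bullet> f2 = 1" using B(3)[of f2] f12 by (simp add: norm_eq_1)
  have inV: "v = (v \<bullet> f1) *\<^sub>R f1 + (v \<bullet> f2) *\<^sub>R f2" if "v \<in> range r" for v
  proof -
    have "v \<in> span {f1, f2}" using that B(6) f12 by simp
    then obtain k1 k2 where k: "v = k1 *\<^sub>R f1 + k2 *\<^sub>R f2"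
      apply (auto simp: span_insert span_singleton)
      by (metis add.commute diff_add_cancel)
    have "v \<bullet> f1 = k1" "v \<bullet> f2 = k2" using o12 o21 n1 n2 unfolding k
      by (auto simp: inner_add_left)
    then show ?thesis using k by simp
  qed
  have rdec: "r x = (x \<bullet> f1) *\<^sub>R r f1 + (x \<bullet> f2) *\<^sub>R r f2" for x
  proof -
    define x' where "x' = x - (x \<bullet> f1) *\<^sub>R f1 - (x \<bullet> f2) *\<^sub>R f2"
    have x'1: "x' \<bullet> f1 = 0" "x' \<bullet> f2 = 0" using o12 o21 n1 n2 unfolding x'_def
      by (auto simp: inner_diff_left)
    have "y \<bullet> r x' = 0" for y
    proof -
      have "r y = (r y \<bullet> f1) *\<^sub>R f1 + (r y \<bullet> f2) *\<^sub>R f2" using inV by auto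
      then have "x' \<bullet> r y = 0" using x'1 by (metis inner_add_right inner_scaleR_right mult_zero_right add_0)
      then show ?thesis using skew[of y x'] by simp
    qed
    then have "r x' = 0" by (metis inner_eq_zero_iff)
    moreover have "r x' = r x - (x \<bullet> f1) *\<^sub>R r f1 - (x \<bullet> f2) *\<^sub>R r f2"
      unfolding x'_def using rlin by (simp add: linear_diff linear_scale)
    ultimately show ?thesis by (simp add: algebra_simps)
  qed
  define c where "c = f2 \<bullet> r f1"
  have rf1: "r f1 = c *\<^sub>R f2"
  proof -
    have "f1 \<bullet> r f1 = 0" using skew[of f1 f1] by simp
    then show ?thesis using inV[of "r f1"] by (simp add: c_def inner_commute)
  qed
  have rf2: "r f2 = - c *\<^sub>R f1"
  proof -
    have "f2 \<bullet> r f2 = 0" using skew[of f2 f2] by simp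
    moreover have "f1 \<bullet> r f2 = - c" using skew[of f1 f2] by (simp add: c_def)
    ultimately show ?thesis using inV[of "r f2"] by (simp add: inner_commute)
  qed
  have c0: "c \<noteq> 0"
  proof
    assume "c = 0"
    then have "r x = 0" for x using rdec[of x] rf1 rf2 by simp
    moreover have "f1 \<in> range r" using B(1) f12 by auto
    ultimately have "f1 = 0" by auto
    then show False using n1 by simp
  qed
  define e1 where "e1 = f1"
  define e2 where "e2 = c *\<^sub>R f2"
  have i11: "e1 \<bullet> e1 = 1" and i12: "e1 \<bullet> e2 = 0" and i21: "e2 \<bullet> e1 = 0" and i22: "e2 \<bullet> e2 = c\<^sup>2"
    using n1 n2 o12 by (auto simp: e1_def e2_def inner_commute power2_eq_square)
  have Rform: "R \<alpha> = \<alpha> e1 *\<^sub>R e2 - \<alpha> e2 *\<^sub>R e1" if la: "linear \<alpha>" for \<alpha>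
  proof -
    define v where "v = (\<Sum>b\<in>Basis. \<alpha> b *\<^sub>R b)"
    have av: "\<alpha> w = v \<bullet> w" for w unfolding v_def by (rule fun_cong[OF dual_rep[OF la]])
    have "R \<alpha> = r v" using Rr[OF la] v_def by simp
    also have "\<dots> = (v \<bullet> f1) *\<^sub>R (c *\<^sub>R f2) + (v \<bullet> f2) *\<^sub>R (- c *\<^sub>R f1)" using rdec rf1 rf2 by simp
    also have "\<dots> = \<alpha> e1 *\<^sub>R e2 - \<alpha> e2 *\<^sub>R e1" by (simp add: av e1_def e2_def)
    finally show ?thesis .
  qed
  have Je2: "J e2 = (e1 \<bullet> J e1) *\<^sub>R e2 - (e1 \<bullet> J e2) *\<^sub>R e1"
  proof -
    have "R (\<lambda>w. e1 \<bullet> w) = e2" using Rform[OF linear_inner, of e1] i11 i12 by simp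
    then have "J e2 = R (\<lambda>w. e1 \<bullet> J w)" using F(10)[OF linear_inner, of e1] by simp
    also have "\<dots> = (e1 \<bullet> J e1) *\<^sub>R e2 - (e1 \<bullet> J e2) *\<^sub>R e1"
      using Rform[OF linear_inner_comp[OF LJ], of e1] by simp
    finally show ?thesis .
  qed
  have Je1: "- (c\<^sup>2) *\<^sub>R J e1 = (e2 \<bullet> J e1) *\<^sub>R e2 - (e2 \<bullet> J e2) *\<^sub>R e1"
  proof -
    have "R (\<lambda>w. e2 \<bullet> w) = - (c\<^sup>2) *\<^sub>R e1" using Rform[OF linear_inner, of e2] i21 i22 by simp
    then have "- (c\<^sup>2) *\<^sub>R J e1 = R (\<lambda>w. e2 \<bullet> J w)" using F(10)[OF linear_inner, of e2] LJ
      by (simp add: linear_scale linear_neg)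
    also have "\<dots> = (e2 \<bullet> J e1) *\<^sub>R e2 - (e2 \<bullet> J e2) *\<^sub>R e1"
      using Rform[OF linear_inner_comp[OF LJ], of e2] by simp
    finally show ?thesis .
  qed
  define lam where "lam = e1 \<bullet> J e1"
  have B0: "e1 \<bullet> J e2 = 0"
  proof -
    have "e1 \<bullet> J e2 = (e1 \<bullet> J e1) * (e1 \<bullet> e2) - (e1 \<bullet> J e2) * (e1 \<bullet> e1)"
      by (subst (1) Je2) (simp add: inner_diff_right)
    then show ?thesis using i11 i12 by simp
  qed
  have JE2: "J e2 = lam *\<^sub>R e2" using Je2 B0 lam_def by simp
  have D0: "e2 \<bullet> J e2 = lam * c\<^sup>2" using JE2 i22 by simp
  have C0: "e2 \<bullet> J e1 = 0"
  proof -
    have "e2 \<bullet> (- (c\<^sup>2) *\<^sub>R J e1) = e2 \<bullet> ((e2 \<bullet> J e1) *\<^sub>R e2 - (e2 \<bullet> J e2) *\<^sub>R e1)" using Je1 by simp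
    then have "- (c\<^sup>2) * (e2 \<bullet> J e1) = (e2 \<bullet> J e1) * c\<^sup>2" using i21 i22 by (simp add: inner_diff_right)
    then have "(e2 \<bullet> J e1) * c\<^sup>2 = 0" by simp
    then show ?thesis using c0 by simp
  qed
  have JE1: "J e1 = lam *\<^sub>R e1"
  proof -
    have "- (c\<^sup>2) *\<^sub>R J e1 = - (c\<^sup>2) *\<^sub>R (lam *\<^sub>R e1)" using Je1 C0 D0 by (simp add: mult.commute)
    then have "(- (c\<^sup>2)) *\<^sub>R J e1 = (- (c\<^sup>2)) *\<^sub>R (lam *\<^sub>R e1)" by simp
    moreover have "- (c\<^sup>2) \<noteq> 0" using c0 by simp
    ultimately show ?thesis using scaleR_cancel_left by blast
  qed
  have s11: "\<sigma> u u = 0" for u using F(6)[of u u] by simp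
  have se12: "\<sigma> e1 e2 = 1 + lam\<^sup>2"
  proof -
    have "J (J e1) + R (\<sigma> e1) = - e1" by (rule F(9))
    then have "lam\<^sup>2 *\<^sub>R e1 - \<sigma> e1 e2 *\<^sub>R e1 = - e1"
      using Rform[OF F(3)] JE1 LJ s11 by (simp add: linear_scale power2_eq_square)
    then have "(lam\<^sup>2 - \<sigma> e1 e2 + 1) *\<^sub>R e1 = 0" by (simp add: algebra_simps)
    moreover have "e1 \<noteq> 0" using i11 by auto
    ultimately show ?thesis by simp
  qed
  have "dim {e1, e2} < DIM('a)" 
  proof -
    have "card {e1, e2} \<le> 2" by (cases "e1 = e2") auto
    then show ?thesis using d dim_le_card'[of "{e1, e2}"] by simp
  qed
  then obtain u where u0: "u \<noteq> 0" and uo: "\<And>y. y \<in> span {e1, e2} \<Longrightarrow> orthogonal u y"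
    using orthogonal_to_subspace_exists by blast
  have ue1: "u \<bullet> e1 = 0" and ue2: "u \<bullet> e2 = 0" using uo[of e1] uo[of e2] by (auto simp: orthogonal_def span_base)
  define w where "w = \<sigma> u e2 *\<^sub>R e1 - \<sigma> u e1 *\<^sub>R e2"
  have JJu: "J (J u) = w - u" using F(9)[of u] Rform[OF F(3)[of u]] unfolding w_def
    by (simp add: algebra_simps)
  have JJw: "J (J w) = lam\<^sup>2 *\<^sub>R w" unfolding w_def using LJ JE1 JE2
    by (simp add: linear_diff linear_scale power2_eq_square algebra_simps)
  define e3 where "e3 = u - (1 / (1 + lam\<^sup>2)) *\<^sub>R w"
  have pos: "1 + lam\<^sup>2 \<noteq> 0" by (metis add_pos_nonneg zero_less_one zero_le_power2 less_irrefl)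
  have JJe3: "J (J e3) = - e3"
  proof -
    have "J (J e3) = (w - u) - (lam\<^sup>2 / (1 + lam\<^sup>2)) *\<^sub>R w" unfolding e3_def using LJ JJu JJw
      by (simp add: linear_diff linear_scale)
    also have "\<dots> = (1 - lam\<^sup>2 / (1 + lam\<^sup>2)) *\<^sub>R w - u" by (simp add: algebra_simps)
    also have "(1 - lam\<^sup>2 / (1 + lam\<^sup>2)) = 1 / (1 + lam\<^sup>2)" using pos by (simp add: field_simps)
    finally show ?thesis unfolding e3_def by simp
  qed
  define e4 where "e4 = - J e3"
  have JE3: "J e3 = - e4" unfolding e4_def by simp
  have JE4: "J e4 = e3" unfolding e4_def using JJe3 LJ by (simp add: linear_neg)
  have JJe4: "J (J e4) = - e4" using JE4 JE3 by simp
  have e1u: "e1 \<bullet> u = 0" and e2u: "e2 \<bullet> u = 0" using ue1 ue2 by (simp_all add: inner_commute)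
  have e3u: "e3 \<bullet> u = u \<bullet> u" unfolding e3_def w_def using e1u e2u
    by (simp add: inner_diff_left inner_add_left)
  have e3n: "e3 \<noteq> 0" using e3u u0 by auto
  have I: "indep4 e1 e2 e3 e4"
    unfolding indep4_def
  proof (intro allI impI)
    fix x1 x2 x3 x4
    assume S: "x1 *\<^sub>R e1 + x2 *\<^sub>R e2 + x3 *\<^sub>R e3 + x4 *\<^sub>R e4 = 0"
    have "J (J (x1 *\<^sub>R e1 + x2 *\<^sub>R e2 + x3 *\<^sub>R e3 + x4 *\<^sub>R e4)) = 0" using S LJ by (simp add: linear_0)
    then have S2: "(lam\<^sup>2 * x1) *\<^sub>R e1 + (lam\<^sup>2 * x2) *\<^sub>R e2 - x3 *\<^sub>R e3 - x4 *\<^sub>R e4 = 0"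
      using LJ JE1 JE2 JJe3 JJe4 by (simp add: linear_add linear_scale power2_eq_square algebra_simps)
    have S3: "((1 + lam\<^sup>2) * x1) *\<^sub>R e1 + ((1 + lam\<^sup>2) * x2) *\<^sub>R e2 = 0"
      using arg_cong2[OF S S2, of "(+)"] by (simp add: algebra_simps)
    have "e1 \<bullet> (((1 + lam\<^sup>2) * x1) *\<^sub>R e1 + ((1 + lam\<^sup>2) * x2) *\<^sub>R e2) = 0" using S3 by simp
    then have X1: "x1 = 0" using i11 i12 pos by (simp add: inner_add_right)
    have "e2 \<bullet> (((1 + lam\<^sup>2) * x1) *\<^sub>R e1 + ((1 + lam\<^sup>2) * x2) *\<^sub>R e2) = 0" using S3 by simp
    then have X2: "x2 = 0" using i21 i22 pos c0 by (simp add: inner_add_right)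
    have T1: "x3 *\<^sub>R e3 + x4 *\<^sub>R e4 = 0" using S X1 X2 by simp
    then have "J (x3 *\<^sub>R e3 + x4 *\<^sub>R e4) = 0" using LJ by (simp add: linear_0)
    then have T2: "x4 *\<^sub>R e3 - x3 *\<^sub>R e4 = 0" using LJ JE3 JE4 by (simp add: linear_add linear_scale)
    have "x3 *\<^sub>R (x3 *\<^sub>R e3 + x4 *\<^sub>R e4) + x4 *\<^sub>R (x4 *\<^sub>R e3 - x3 *\<^sub>R e4) = 0" using T1 T2 by simp
    then have "(x3 * x3 + x4 * x4) *\<^sub>R e3 = 0" by (simp add: algebra_simps)
    then have "x3 * x3 + x4 * x4 = 0" using e3n by simp
    then have "x3 = 0 \<and> x4 = 0" by (metis add_nonneg_eq_0_iff mult_eq_0_iff zero_le_square)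
    then show "x1 = 0 \<and> x2 = 0 \<and> x3 = 0 \<and> x4 = 0" using X1 X2 by simp
  qed
  have sW: "\<sigma> v e1 = 0 \<and> \<sigma> v e2 = 0" if "J (J v) = - v" for v
  proof -
    have "R (\<sigma> v) = 0" using F(9)[of v] that by simp
    then have Z: "\<sigma> v e1 *\<^sub>R e2 - \<sigma> v e2 *\<^sub>R e1 = 0" using Rform[OF F(3)] by simp
    have "e1 \<bullet> (\<sigma> v e1 *\<^sub>R e2 - \<sigma> v e2 *\<^sub>R e1) = 0" using Z by simp
    then have "\<sigma> v e2 = 0" using i11 i12 by (simp add: inner_diff_right)
    moreover have "e2 \<bullet> (\<sigma> v e1 *\<^sub>R e2 - \<sigma> v e2 *\<^sub>R e1) = 0" using Z by simp
    then have "\<sigma> v e1 = 0" using i21 i22 c0 by (simp add: inner_diff_right)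
    ultimately show ?thesis by simp
  qed
  have s34: "\<sigma> e3 e4 = 0"
  proof -
    have "\<sigma> (J e3) e3 = \<sigma> e3 (J e3)" by (rule F(11))
    moreover have "\<sigma> (- e4) = (\<lambda>x. - \<sigma> e4 x)" using F(4)[of "-1" e4 0 e4] by simp
    moreover have "\<sigma> e3 (- e4) = - \<sigma> e3 e4" using F(3)[of e3] by (simp add: linear_neg)
    ultimately have "- \<sigma> e4 e3 = - \<sigma> e3 e4" using JE3 by simp
    then show ?thesis using F(6)[of e4 e3] by simp
  qed
  have sk: "\<sigma> a b = - \<sigma> b a" for a b by (rule F(6))
  have w3: "\<sigma> e3 e1 = 0" "\<sigma> e3 e2 = 0" using sW[OF JJe3] by auto
  have w4: "\<sigma> e4 e1 = 0" "\<sigma> e4 e2 = 0" using sW[OF JJe4] by auto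
  have t: "\<sigma> e2 e1 = - (1 + lam\<^sup>2)" "\<sigma> e1 e3 = 0" "\<sigma> e1 e4 = 0" "\<sigma> e2 e3 = 0" "\<sigma> e2 e4 = 0"
     "\<sigma> e4 e3 = 0"
    using sk[of e2 e1] sk[of e1 e3] sk[of e1 e4] sk[of e2 e3] sk[of e2 e4] sk[of e4 e3] se12 w3 w4 s34 by simp_all
  have "good J R \<sigma> e1 e2 e3 e4 lam"
    unfolding good_def
    using I JE1 JE2 JE3 JE4 Rform se12 s11 w3 w4 s34 t
    by (simp add: dual_space_def)
  then show ?thesis by blast
qed

lemma sig_rules:
  assumes G: "gen_complex_structure br J R \<sigma>"
  shows "\<sigma> (x + y) = (\<lambda>w. \<sigma> x w + \<sigma> y w)" "\<sigma> (x - y) = (\<lambda>w. \<sigma> x w - \<sigma> y w)"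
    "\<sigma> (c *\<^sub>R x) = (\<lambda>w. c * \<sigma> x w)" "\<sigma> (- x) = (\<lambda>w. - \<sigma> x w)"
    "\<sigma> u (a + b) = \<sigma> u a + \<sigma> u b" "\<sigma> u (a - b) = \<sigma> u a - \<sigma> u b"
    "\<sigma> u (c *\<^sub>R a) = c * \<sigma> u a" "\<sigma> u (- a) = - \<sigma> u a"
proof -
  note F = gcs_facts[OF G]
  show "\<sigma> (x + y) = (\<lambda>w. \<sigma> x w + \<sigma> y w)" using F(4)[of 1 x 1 y] by simp
  show "\<sigma> (x - y) = (\<lambda>w. \<sigma> x w - \<sigma> y w)" using F(4)[of 1 x "-1" y] by simp
  show "\<sigma> (c *\<^sub>R x) = (\<lambda>w. c * \<sigma> x w)" using F(4)[of c x 0 x] by simp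
  show "\<sigma> (- x) = (\<lambda>w. - \<sigma> x w)" using F(4)[of "-1" x 0 x] by simp
  show "\<sigma> u (a + b) = \<sigma> u a + \<sigma> u b" using F(3)[of u] by (simp add: linear_add)
  show "\<sigma> u (a - b) = \<sigma> u a - \<sigma> u b" using F(3)[of u] by (simp add: linear_diff)
  show "\<sigma> u (c *\<^sub>R a) = c * \<sigma> u a" using F(3)[of u] by (simp add: linear_scale)
  show "\<sigma> u (- a) = - \<sigma> u a" using F(3)[of u] by (simp add: linear_neg)
qed

lemma lin_rules:
  assumes "linear f"
  shows "f (x + y) = f x + f y" "f (x - y) = f x - f y" "f (c *\<^sub>R x) = c *\<^sub>R f x" "f (- x) = - f x" "f 0 = 0"
  using assms by (simp_all add: linear_add linear_diff linear_scale linear_neg linear_0)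

lemma lin_rules_real:
  assumes "linear (f::'a::real_vector \<Rightarrow> real)"
  shows "f (x + y) = f x + f y" "f (x - y) = f x - f y" "f (c *\<^sub>R x) = c * f x" "f (- x) = - f x" "f 0 = 0"
  using lin_rules[OF assms] by simp_all

lemma good_change:
  assumes G: "gen_complex_structure br J R \<sigma>" and g: "good J R \<sigma> e1 e2 e3 e4 lam"
    and det: "A * D - B * C = 1" and pq: "P\<^sup>2 + Q\<^sup>2 \<noteq> 0"
  shows "good J R \<sigma> (A *\<^sub>R e1 + B *\<^sub>R e2) (C *\<^sub>R e1 + D *\<^sub>R e2) (P *\<^sub>R e3 + Q *\<^sub>R e4) (P *\<^sub>R e4 - Q *\<^sub>R e3) lam"
proof -
  note F = gcs_facts[OF G]
  note S = sig_rules[OF G]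
  note L = lin_rules[OF F(1)]
  note gg = g[unfolded good_def]
  have I: "indep4 e1 e2 e3 e4" using gg by blast
  have I': "indep4 (A *\<^sub>R e1 + B *\<^sub>R e2) (C *\<^sub>R e1 + D *\<^sub>R e2) (P *\<^sub>R e3 + Q *\<^sub>R e4) (P *\<^sub>R e4 - Q *\<^sub>R e3)"
    unfolding indep4_def
  proof (intro allI impI)
    fix x1 x2 x3 x4
    assume "x1 *\<^sub>R (A *\<^sub>R e1 + B *\<^sub>R e2) + x2 *\<^sub>R (C *\<^sub>R e1 + D *\<^sub>R e2) + x3 *\<^sub>R (P *\<^sub>R e3 + Q *\<^sub>R e4) + x4 *\<^sub>R (P *\<^sub>R e4 - Q *\<^sub>R e3) = 0"
    then have "(x1 * A + x2 * C) *\<^sub>R e1 + (x1 * B + x2 * D) *\<^sub>R e2 + (x3 * P - x4 * Q) *\<^sub>R e3 + (x3 * Q + x4 * P) *\<^sub>R e4 = 0"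
      by (simp add: algebra_simps)
    note z = indep4D[OF I this]
    have "x1 = x1 * (A * D - B * C)" using det by simp
    also have "\<dots> = D * (x1 * A + x2 * C) - C * (x1 * B + x2 * D)" by (simp add: algebra_simps)
    finally have X1: "x1 = 0" using z by simp
    have "x2 = x2 * (A * D - B * C)" using det by simp
    also have "\<dots> = A * (x1 * B + x2 * D) - B * (x1 * A + x2 * C)" by (simp add: algebra_simps)
    finally have X2: "x2 = 0" using z by simp
    have "x3 * (P\<^sup>2 + Q\<^sup>2) = P * (x3 * P - x4 * Q) + Q * (x3 * Q + x4 * P)" by (simp add: algebra_simps power2_eq_square)
    then have X3: "x3 = 0" using z pq by auto
    have "x4 * (P\<^sup>2 + Q\<^sup>2) = P * (x3 * Q + x4 * P) - Q * (x3 * P - x4 * Q)" by (simp add: algebra_simps power2_eq_square)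
    then have X4: "x4 = 0" using z pq by auto
    show "x1 = 0 \<and> x2 = 0 \<and> x3 = 0 \<and> x4 = 0" using X1 X2 X3 X4 by simp
  qed
  have Rn: "R \<alpha> = \<alpha> (A *\<^sub>R e1 + B *\<^sub>R e2) *\<^sub>R (C *\<^sub>R e1 + D *\<^sub>R e2) - \<alpha> (C *\<^sub>R e1 + D *\<^sub>R e2) *\<^sub>R (A *\<^sub>R e1 + B *\<^sub>R e2)"
    if "\<alpha> \<in> dual_space" for \<alpha>
  proof -
    have la: "linear \<alpha>" using that by (simp add: dual_space_def)
    note La = lin_rules_real[OF la]
    have "\<alpha> (A *\<^sub>R e1 + B *\<^sub>R e2) *\<^sub>R (C *\<^sub>R e1 + D *\<^sub>R e2) - \<alpha> (C *\<^sub>R e1 + D *\<^sub>R e2) *\<^sub>R (A *\<^sub>R e1 + B *\<^sub>R e2)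
       = (- ((A * D - B * C) * \<alpha> e2)) *\<^sub>R e1 + ((A * D - B * C) * \<alpha> e1) *\<^sub>R e2"
      by (simp add: La algebra_simps)
    also have "\<dots> = R \<alpha>" using det gg that by simp
    finally show ?thesis by simp
  qed
  have ge: "J e1 = lam *\<^sub>R e1" "J e2 = lam *\<^sub>R e2" "J e3 = - e4" "J e4 = e3"
    "\<sigma> e1 e1 = 0" "\<sigma> e1 e2 = 1 + lam\<^sup>2" "\<sigma> e1 e3 = 0" "\<sigma> e1 e4 = 0"
    "\<sigma> e2 e1 = - (1 + lam\<^sup>2)" "\<sigma> e2 e2 = 0" "\<sigma> e2 e3 = 0" "\<sigma> e2 e4 = 0"
    "\<sigma> e3 e1 = 0" "\<sigma> e3 e2 = 0" "\<sigma> e3 e3 = 0" "\<sigma> e3 e4 = 0"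
    "\<sigma> e4 e1 = 0" "\<sigma> e4 e2 = 0" "\<sigma> e4 e3 = 0" "\<sigma> e4 e4 = 0"
    using gg by auto
  have j: "J (A *\<^sub>R e1 + B *\<^sub>R e2) = lam *\<^sub>R (A *\<^sub>R e1 + B *\<^sub>R e2)" "J (C *\<^sub>R e1 + D *\<^sub>R e2) = lam *\<^sub>R (C *\<^sub>R e1 + D *\<^sub>R e2)" "J (P *\<^sub>R e3 + Q *\<^sub>R e4) = - (P *\<^sub>R e4 - Q *\<^sub>R e3)" "J (P *\<^sub>R e4 - Q *\<^sub>R e3) = (P *\<^sub>R e3 + Q *\<^sub>R e4)"
    using ge(1-4) by (simp_all add: L algebra_simps)
  have s11: "\<sigma> (A *\<^sub>R e1 + B *\<^sub>R e2) (A *\<^sub>R e1 + B *\<^sub>R e2) = 0" by (simp add: S ge(5-20) algebra_simps)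
  have s12: "\<sigma> (A *\<^sub>R e1 + B *\<^sub>R e2) (C *\<^sub>R e1 + D *\<^sub>R e2) = 1 + lam\<^sup>2"
  proof -
    have "\<sigma> (A *\<^sub>R e1 + B *\<^sub>R e2) (C *\<^sub>R e1 + D *\<^sub>R e2) = (A * D - B * C) * (1 + lam\<^sup>2)" by (simp add: S ge(5-20) algebra_simps)
    then show ?thesis using det by simp
  qed
  have s13: "\<sigma> (A *\<^sub>R e1 + B *\<^sub>R e2) (P *\<^sub>R e3 + Q *\<^sub>R e4) = 0" by (simp add: S ge(5-20) algebra_simps)
  have s14: "\<sigma> (A *\<^sub>R e1 + B *\<^sub>R e2) (P *\<^sub>R e4 - Q *\<^sub>R e3) = 0" by (simp add: S ge(5-20) algebra_simps)
  have s21: "\<sigma> (C *\<^sub>R e1 + D *\<^sub>R e2) (A *\<^sub>R e1 + B *\<^sub>R e2) = - (1 + lam\<^sup>2)"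
  proof -
    have "\<sigma> (C *\<^sub>R e1 + D *\<^sub>R e2) (A *\<^sub>R e1 + B *\<^sub>R e2) = - (A * D - B * C) * (1 + lam\<^sup>2)" by (simp add: S ge(5-20) algebra_simps)
    then show ?thesis using det by simp
  qed
  have s22: "\<sigma> (C *\<^sub>R e1 + D *\<^sub>R e2) (C *\<^sub>R e1 + D *\<^sub>R e2) = 0" by (simp add: S ge(5-20) algebra_simps)
  have s23: "\<sigma> (C *\<^sub>R e1 + D *\<^sub>R e2) (P *\<^sub>R e3 + Q *\<^sub>R e4) = 0" by (simp add: S ge(5-20) algebra_simps)
  have s24: "\<sigma> (C *\<^sub>R e1 + D *\<^sub>R e2) (P *\<^sub>R e4 - Q *\<^sub>R e3) = 0" by (simp add: S ge(5-20) algebra_simps)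
  have s31: "\<sigma> (P *\<^sub>R e3 + Q *\<^sub>R e4) (A *\<^sub>R e1 + B *\<^sub>R e2) = 0" by (simp add: S ge(5-20) algebra_simps)
  have s32: "\<sigma> (P *\<^sub>R e3 + Q *\<^sub>R e4) (C *\<^sub>R e1 + D *\<^sub>R e2) = 0" by (simp add: S ge(5-20) algebra_simps)
  have s33: "\<sigma> (P *\<^sub>R e3 + Q *\<^sub>R e4) (P *\<^sub>R e3 + Q *\<^sub>R e4) = 0" by (simp add: S ge(5-20) algebra_simps)
  have s34: "\<sigma> (P *\<^sub>R e3 + Q *\<^sub>R e4) (P *\<^sub>R e4 - Q *\<^sub>R e3) = 0" by (simp add: S ge(5-20) algebra_simps)
  have s41: "\<sigma> (P *\<^sub>R e4 - Q *\<^sub>R e3) (A *\<^sub>R e1 + B *\<^sub>R e2) = 0" by (simp add: S ge(5-20) algebra_simps)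
  have s42: "\<sigma> (P *\<^sub>R e4 - Q *\<^sub>R e3) (C *\<^sub>R e1 + D *\<^sub>R e2) = 0" by (simp add: S ge(5-20) algebra_simps)
  have s43: "\<sigma> (P *\<^sub>R e4 - Q *\<^sub>R e3) (P *\<^sub>R e3 + Q *\<^sub>R e4) = 0" by (simp add: S ge(5-20) algebra_simps)
  have s44: "\<sigma> (P *\<^sub>R e4 - Q *\<^sub>R e3) (P *\<^sub>R e4 - Q *\<^sub>R e3) = 0" by (simp add: S ge(5-20) algebra_simps)
  show ?thesis
    unfolding good_def
    using I' Rn j s11 s12 s13 s14 s21 s22 s23 s24 s31 s32 s33 s34 s41 s42 s43 s44 by blast
qed

lemma lie_facts:
  assumes "lie_algebra br"
  shows "bilinear br" "\<And>x. linear (br x)" "\<And>y. linear (\<lambda>x. br x y)" "\<And>u. br u u = 0"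
    "\<And>u v. br u v = - br v u"
    "\<And>u v w. br u (br v w) + br v (br w u) + br w (br u v) = 0"
proof -
  show B: "bilinear br" using assms by (simp add: lie_algebra_def)
  show "\<And>x. linear (br x)" using B by (simp add: bilinear_def)
  show "\<And>y. linear (\<lambda>x. br x y)" using B by (simp add: bilinear_def)
  show uu: "\<And>u. br u u = 0" using assms by (simp add: lie_algebra_def)
  show "\<And>u v w. br u (br v w) + br v (br w u) + br w (br u v) = 0" using assms by (simp add: lie_algebra_def)
  show "\<And>u v. br u v = - br v u"
  proof -
    fix u v
    have "br (u + v) (u + v) = 0" by (rule uu)
    then have "br u u + br u v + (br v u + br v v) = 0" using B
      by (simp add: bilinear_ladd bilinear_radd)
    then show "br u v = - br v u" using uu by (simp add: add_eq_0_iff)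
  qed
qed

lemma nij_cov:
  fixes J :: "'a::real_vector \<Rightarrow> 'a"
  assumes L: "lie_algebra br" and G: "gen_complex_structure br J R \<sigma>"
    and la: "linear \<alpha>" and lb: "linear \<beta>"
  shows "fst (nijenhuis br (gc_K J R \<sigma>) (0, \<alpha>) (0, \<beta>)) =
      br (R \<alpha>) (R \<beta>) - R (\<lambda>w. - \<beta> (br (R \<alpha>) w)) - R (\<lambda>w. \<alpha> (br (R \<beta>) w))"
    and "snd (nijenhuis br (gc_K J R \<sigma>) (0, \<alpha>) (0, \<beta>)) w =
      \<beta> (J (br (R \<alpha>) w)) - \<alpha> (J (br (R \<beta>) w)) - \<beta> (br (R \<alpha>) (J w)) + \<alpha> (br (R \<beta>) (J w))"
proof -
  note F = gcs_facts[OF G]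
  note B = lie_facts[OF L]
  have b0: "br x 0 = 0" "br 0 x = 0" for x using lin_rules(5)[OF B(2)] lin_rules(5)[OF B(3)] by auto
  have J0: "J 0 = 0" using lin_rules(5)[OF F(1)] .
  have a0: "\<alpha> 0 = 0" "\<beta> 0 = 0" using lin_rules(5)[OF la] lin_rules(5)[OF lb] by auto
  show "fst (nijenhuis br (gc_K J R \<sigma>) (0, \<alpha>) (0, \<beta>)) =
      br (R \<alpha>) (R \<beta>) - R (\<lambda>w. - \<beta> (br (R \<alpha>) w)) - R (\<lambda>w. \<alpha> (br (R \<beta>) w))"
    unfolding nijenhuis_def phi_bracket_def gc_K_def ad_t_def Let_def
    by (simp add: b0 J0 a0 F(7) F(8))
  show "snd (nijenhuis br (gc_K J R \<sigma>) (0, \<alpha>) (0, \<beta>)) w =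
      \<beta> (J (br (R \<alpha>) w)) - \<alpha> (J (br (R \<beta>) w)) - \<beta> (br (R \<alpha>) (J w)) + \<alpha> (br (R \<beta>) (J w))"
    unfolding nijenhuis_def phi_bracket_def gc_K_def ad_t_def Let_def
    by (simp add: b0 J0 a0 F(7) F(8))
qed

lemma trace_basis:
  fixes f :: "'a::euclidean_space \<Rightarrow> 'a"
  assumes lf: "linear f" and l: "linear d1" "linear d2" "linear d3" "linear d4"
    and ex: "\<And>x. x = d1 x *\<^sub>R e1 + d2 x *\<^sub>R e2 + d3 x *\<^sub>R e3 + d4 x *\<^sub>R e4"
  shows "lin_trace f = d1 (f e1) + d2 (f e2) + d3 (f e3) + d4 (f e4)"
proof -
  have key: "(\<Sum>b\<in>Basis. d b * (v \<bullet> b)) = d v" if ld: "linear d" for d :: "'a \<Rightarrow> real" and v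
  proof -
    have "d v = d (\<Sum>b\<in>Basis. (v \<bullet> b) *\<^sub>R b)" by (simp add: euclidean_representation)
    also have "\<dots> = (\<Sum>b\<in>Basis. (v \<bullet> b) * d b)" using ld by (simp add: linear_sum linear_scale)
    finally show ?thesis by (simp add: mult.commute)
  qed
  have "f b \<bullet> b = d1 b * (f e1 \<bullet> b) + d2 b * (f e2 \<bullet> b) + d3 b * (f e3 \<bullet> b) + d4 b * (f e4 \<bullet> b)" for b
  proof -
    have "f b = d1 b *\<^sub>R f e1 + d2 b *\<^sub>R f e2 + d3 b *\<^sub>R f e3 + d4 b *\<^sub>R f e4"
      by (subst ex[of b]) (simp add: lin_rules[OF lf])
    then show ?thesis by (simp add: inner_add_left)
  qed
  then have "lin_trace f = (\<Sum>b\<in>Basis. d1 b * (f e1 \<bullet> b) + d2 b * (f e2 \<bullet> b) + d3 b * (f e3 \<bullet> b) + d4 b * (f e4 \<bullet> b))"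
    unfolding lin_trace_def by simp
  also have "\<dots> = d1 (f e1) + d2 (f e2) + d3 (f e3) + d4 (f e4)"
    by (simp add: sum.distrib key[OF l(1)] key[OF l(2)] key[OF l(3)] key[OF l(4)])
  finally show ?thesis .
qed

lemma brstructure:
  fixes br :: "'a::euclidean_space \<Rightarrow> 'a \<Rightarrow> 'a"
  assumes d: "DIM('a) = 4" and L: "lie_algebra br" and U: "unimodular br"
    and G: "gen_complex_structure br J R \<sigma>" and g: "good J R \<sigma> e1 e2 e3 e4 lam"
  shows "\<exists>a b p1 p2 s1 s2 th1 t1 u1 th2 m1 m2.
    br e1 e2 = a *\<^sub>R e1 + b *\<^sub>R e2 \<and>
    br e1 e3 = p1 *\<^sub>R e1 + p2 *\<^sub>R e2 + (- b / 2) *\<^sub>R e3 + th1 *\<^sub>R e4 \<and>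
    br e1 e4 = s1 *\<^sub>R e1 + s2 *\<^sub>R e2 + (- th1) *\<^sub>R e3 + (- b / 2) *\<^sub>R e4 \<and>
    br e2 e3 = t1 *\<^sub>R e1 + (- p1) *\<^sub>R e2 + (a / 2) *\<^sub>R e3 + th2 *\<^sub>R e4 \<and>
    br e2 e4 = u1 *\<^sub>R e1 + (- s1) *\<^sub>R e2 + (- th2) *\<^sub>R e3 + (a / 2) *\<^sub>R e4 \<and>
    br e3 e4 = m1 *\<^sub>R e1 + m2 *\<^sub>R e2"
proof -
  note F = gcs_facts[OF G]
  note B = lie_facts[OF L]
  note gg = g[unfolded good_def]
  have I: "indep4 e1 e2 e3 e4" using gg by blast
  have JE: "J e1 = lam *\<^sub>R e1" "J e2 = lam *\<^sub>R e2" "J e3 = - e4" "J e4 = e3" using gg by auto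
  have Rf: "R \<alpha> = \<alpha> e1 *\<^sub>R e2 - \<alpha> e2 *\<^sub>R e1" if "linear \<alpha>" for \<alpha>
    using gg that by (auto simp: dual_space_def)
  obtain d1 d2 d3 d4 :: "'a \<Rightarrow> real" where dl: "linear d1" "linear d2" "linear d3" "linear d4"
    and dv: "d1 e1 = 1" "d1 e2 = 0" "d1 e3 = 0" "d1 e4 = 0"
    "d2 e1 = 0" "d2 e2 = 1" "d2 e3 = 0" "d2 e4 = 0"
    "d3 e1 = 0" "d3 e2 = 0" "d3 e3 = 1" "d3 e4 = 0"
    "d4 e1 = 0" "d4 e2 = 0" "d4 e3 = 0" "d4 e4 = 1"
    and ex: "\<And>x. x = d1 x *\<^sub>R e1 + d2 x *\<^sub>R e2 + d3 x *\<^sub>R e3 + d4 x *\<^sub>R e4"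
    using dual_exists[OF d I] by blast
  note D1 = lin_rules_real[OF dl(1)] and D2 = lin_rules_real[OF dl(2)]
    and D3 = lin_rules_real[OF dl(3)] and D4 = lin_rules_real[OF dl(4)]
  note LJ = lin_rules[OF F(1)]
  have dJ: "d1 (J x) = lam * d1 x" "d2 (J x) = lam * d2 x" "d3 (J x) = d4 x" "d4 (J x) = - d3 x" for x
  proof -
    have "J x = (lam * d1 x) *\<^sub>R e1 + (lam * d2 x) *\<^sub>R e2 + (- d3 x) *\<^sub>R e4 + d4 x *\<^sub>R e3"
      by (subst ex[of x]) (simp add: LJ JE mult.commute)
    then show "d1 (J x) = lam * d1 x" "d2 (J x) = lam * d2 x" "d3 (J x) = d4 x" "d4 (J x) = - d3 x"
      by (simp_all add: D1 D2 D3 D4 dv)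
  qed
  have Rd: "R d1 = e2" "R d2 = - e1" "R d3 = 0" "R d4 = 0"
    using Rf[OF dl(1)] Rf[OF dl(2)] Rf[OF dl(3)] Rf[OF dl(4)] dv by auto
  have Rc: "R (\<lambda>w. dd (br x w)) = dd (br x e1) *\<^sub>R e2 - dd (br x e2) *\<^sub>R e1" if "linear dd" for dd x
    using Rf[OF linear_comp'[OF B(2) that]] by simp
  have Rcn: "R (\<lambda>w. - dd (br x w)) = - (dd (br x e1) *\<^sub>R e2 - dd (br x e2) *\<^sub>R e1)" if "linear dd" for dd x
    using F(12)[OF linear_comp'[OF B(2) that]] Rc[OF that] by simp
  have brn: "br (- x) y = - br x y" "br x (- y) = - br x y" "br 0 y = 0" "br x 0 = 0" for x y
    using lin_rules(4,5)[OF B(2)] lin_rules(4,5)[OF B(3)] by auto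
  have N0: "nijenhuis br (gc_K J R \<sigma>) (0, \<alpha>) (0, \<beta>) = (0, \<lambda>w. 0)" if "linear \<alpha>" "linear \<beta>" for \<alpha> \<beta>
    using G that unfolding gen_complex_structure_def Phi_def dual_space_def by auto
  have N12f: "br e1 e2 - d2 (br e1 e2) *\<^sub>R e2 - d1 (br e1 e2) *\<^sub>R e1 = 0"
  proof -
    have "fst (nijenhuis br (gc_K J R \<sigma>) (0, d1) (0, d2)) = 0" using N0[OF dl(1) dl(2)] by simp
    then have "br e2 (- e1) - R (\<lambda>w. - d2 (br e2 w)) - R (\<lambda>w. d1 (br (- e1) w)) = 0"
      using nij_cov(1)[OF L G dl(1) dl(2)] Rd by simp
    then have "br e2 (- e1) - R (\<lambda>w. - d2 (br e2 w)) - R (\<lambda>w. - d1 (br e1 w)) = 0"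
      by (simp add: brn D1)
    then show ?thesis using Rcn[OF dl(2), of e2] Rcn[OF dl(1), of e1] B(4) B(5)[of e2 e1] brn
      by (simp add: D1 D2)
  qed
  have c12: "d3 (br e1 e2) = 0" "d4 (br e1 e2) = 0"
    using arg_cong[OF N12f, of d3] arg_cong[OF N12f, of d4] by (simp_all add: D3 D4 dv)
  have N12s: "lam * d2 (br e2 w) + lam * d1 (br e1 w) - d2 (br e2 (J w)) - d1 (br e1 (J w)) = 0" for w
  proof -
    have "snd (nijenhuis br (gc_K J R \<sigma>) (0, d1) (0, d2)) w = 0" using N0[OF dl(1) dl(2)] by simp
    then show ?thesis using nij_cov(2)[OF L G dl(1) dl(2), of w] Rd by (simp add: brn dJ D1 D2)
  qed
  have tau: "d1 (br e1 e3) + d2 (br e2 e3) = 0" "d1 (br e1 e4) + d2 (br e2 e4) = 0"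
  proof -
    have a: "lam * (d1 (br e1 e3) + d2 (br e2 e3)) + (d1 (br e1 e4) + d2 (br e2 e4)) = 0"
      using N12s[of e3] JE by (simp add: brn D1 D2 algebra_simps)
    have b: "lam * (d1 (br e1 e4) + d2 (br e2 e4)) - (d1 (br e1 e3) + d2 (br e2 e3)) = 0"
      using N12s[of e4] JE by (simp add: brn D1 D2 algebra_simps)
    define x where "x = d1 (br e1 e3) + d2 (br e2 e3)"
    define y where "y = d1 (br e1 e4) + d2 (br e2 e4)"
    have "lam * x + y = 0" "lam * y - x = 0" using a b x_def y_def by auto
    then have "(1 + lam\<^sup>2) * y = 0" by (simp add: algebra_simps power2_eq_square)
    moreover have "1 + lam\<^sup>2 \<noteq> 0" by (metis add_pos_nonneg zero_less_one zero_le_power2 less_irrefl)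
    ultimately have "y = 0" by simp
    then show "d1 (br e1 e3) + d2 (br e2 e3) = 0" "d1 (br e1 e4) + d2 (br e2 e4) = 0"
      using \<open>lam * y - x = 0\<close> x_def y_def by auto
  qed
  have N13: "d4 (br e2 w) - d3 (br e2 (J w)) = 0" for w
  proof -
    have "snd (nijenhuis br (gc_K J R \<sigma>) (0, d1) (0, d3)) w = 0" using N0[OF dl(1) dl(3)] by simp
    then show ?thesis using nij_cov(2)[OF L G dl(1) dl(3), of w] Rd by (simp add: brn dJ D1 D3 LJ)
  qed
  have N23: "d4 (br e1 w) - d3 (br e1 (J w)) = 0" for w
  proof -
    have "snd (nijenhuis br (gc_K J R \<sigma>) (0, d2) (0, d3)) w = 0" using N0[OF dl(2) dl(3)] by simp
    then show ?thesis using nij_cov(2)[OF L G dl(2) dl(3), of w] Rd by (simp add: brn dJ D2 D3 LJ)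
  qed
  have rot: "d4 (br e2 e3) = - d3 (br e2 e4)" "d4 (br e2 e4) = d3 (br e2 e3)"
     "d4 (br e1 e3) = - d3 (br e1 e4)" "d4 (br e1 e4) = d3 (br e1 e3)"
    using N13[of e3] N13[of e4] N23[of e3] N23[of e4] JE by (simp_all add: brn D3 D4)
  have tr: "d1 (br u e1) + d2 (br u e2) + d3 (br u e3) + d4 (br u e4) = 0" for u
    using U trace_basis[OF B(2) dl ex, of u] unfolding unimodular_def by simp
  have sw: "dd (br x y) = - dd (br y x)" if "linear dd" for dd :: "'a \<Rightarrow> real" and x y
    using B(5)[of x y] lin_rules_real(4)[OF that] by simp
  have tr1: "d2 (br e1 e2) + d3 (br e1 e3) + d4 (br e1 e4) = 0" using tr[of e1] B(4) D1 by simp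
  have tr2: "- d1 (br e1 e2) + d3 (br e2 e3) + d4 (br e2 e4) = 0" using tr[of e2] B(4) D2 sw[OF dl(1), of e2 e1] by simp
  have tr3: "- d1 (br e1 e3) - d2 (br e2 e3) + d4 (br e3 e4) = 0"
    using tr[of e3] B(4) D3 sw[OF dl(1), of e3 e1] sw[OF dl(2), of e3 e2] by simp
  have tr4: "- d1 (br e1 e4) - d2 (br e2 e4) - d3 (br e3 e4) = 0"
    using tr[of e4] B(4) D4 sw[OF dl(1), of e4 e1] sw[OF dl(2), of e4 e2] sw[OF dl(3), of e4 e3] by simp
  define a where "a = d1 (br e1 e2)"
  define b where "b = d2 (br e1 e2)"
  have v1: "br e1 e2 = a *\<^sub>R e1 + b *\<^sub>R e2" using ex[of "br e1 e2"] c12 a_def b_def by simp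
  have v2: "br e1 e3 = d1 (br e1 e3) *\<^sub>R e1 + d2 (br e1 e3) *\<^sub>R e2 + (- b / 2) *\<^sub>R e3 + d4 (br e1 e3) *\<^sub>R e4"
  proof -
    have "d3 (br e1 e3) = - b / 2" using tr1 rot b_def by simp
    then show ?thesis using ex[of "br e1 e3"] by simp
  qed
  have v3: "br e1 e4 = d1 (br e1 e4) *\<^sub>R e1 + d2 (br e1 e4) *\<^sub>R e2 + (- d4 (br e1 e3)) *\<^sub>R e3 + (- b / 2) *\<^sub>R e4"
  proof -
    have "d4 (br e1 e4) = - b / 2" using tr1 rot b_def by simp
    then show ?thesis using ex[of "br e1 e4"] rot by simp
  qed
  have v4: "br e2 e3 = d1 (br e2 e3) *\<^sub>R e1 + (- d1 (br e1 e3)) *\<^sub>R e2 + (a / 2) *\<^sub>R e3 + d4 (br e2 e3) *\<^sub>R e4"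
  proof -
    have h1: "d3 (br e2 e3) = a / 2" using tr2 rot a_def by simp
    have h2: "d2 (br e2 e3) = - d1 (br e1 e3)" using tau by simp
    show ?thesis using ex[of "br e2 e3"] unfolding h1 h2 .
  qed
  have v5: "br e2 e4 = d1 (br e2 e4) *\<^sub>R e1 + (- d1 (br e1 e4)) *\<^sub>R e2 + (- d4 (br e2 e3)) *\<^sub>R e3 + (a / 2) *\<^sub>R e4"
  proof -
    have h1: "d4 (br e2 e4) = a / 2" using tr2 rot a_def by simp
    have h2: "d2 (br e2 e4) = - d1 (br e1 e4)" using tau by simp
    show ?thesis using ex[of "br e2 e4"] unfolding h1 h2 rot by simp
  qed
  have v6: "br e3 e4 = d1 (br e3 e4) *\<^sub>R e1 + d2 (br e3 e4) *\<^sub>R e2"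
  proof -
    have "d4 (br e3 e4) = 0" "d3 (br e3 e4) = 0" using tr3 tr4 tau by simp_all
    then show ?thesis using ex[of "br e3 e4"] by simp
  qed
  show ?thesis using v1 v2 v3 v4 v5 v6 by blast
qed

lemma jacobi_eqs:
  fixes br :: "'a::euclidean_space \<Rightarrow> 'a \<Rightarrow> 'a"
  assumes d: "DIM('a) = 4" and L: "lie_algebra br" and I: "indep4 e1 e2 e3 e4"
    and h12: "br e1 e2 = a *\<^sub>R e1 + b *\<^sub>R e2"
    and h13: "br e1 e3 = p1 *\<^sub>R e1 + p2 *\<^sub>R e2 + (- b / 2) *\<^sub>R e3 + th1 *\<^sub>R e4"
    and h14: "br e1 e4 = s1 *\<^sub>R e1 + s2 *\<^sub>R e2 + (- th1) *\<^sub>R e3 + (- b / 2) *\<^sub>R e4"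
    and h23: "br e2 e3 = t1 *\<^sub>R e1 + (- p1) *\<^sub>R e2 + (a / 2) *\<^sub>R e3 + th2 *\<^sub>R e4"
    and h24: "br e2 e4 = u1 *\<^sub>R e1 + (- s1) *\<^sub>R e2 + (- th2) *\<^sub>R e3 + (a / 2) *\<^sub>R e4"
    and h34: "br e3 e4 = m1 *\<^sub>R e1 + m2 *\<^sub>R e2"
  shows "a * th1 + b * th2 = 0"
    and "- (a * p1) / 2 - (b * t1) / 2 + s1 * th2 - th1 * u1 = 0"
    and "- (a * p2) / 2 + (b * p1) / 2 + s1 * th1 + s2 * th2 = 0"
    and "- (a * s1) / 2 - (b * u1) / 2 - p1 * th2 + t1 * th1 = 0"
    and "- (a * s2) / 2 + (b * s1) / 2 - p1 * th1 - p2 * th2 = 0"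
    and "a * m2 + b * m1 - p2 * u1 + s2 * t1 = 0"
    and "b * m2 - p1 * s2 + p2 * s1 = 0"
    and "- a * m1 + p1 * u1 - s1 * t1 = 0"
proof -
  note B = lie_facts[OF L]
  obtain d1 d2 d3 d4 :: "'a \<Rightarrow> real" where dl: "linear d1" "linear d2" "linear d3" "linear d4"
    and dv: "d1 e1 = 1" "d1 e2 = 0" "d1 e3 = 0" "d1 e4 = 0"
    "d2 e1 = 0" "d2 e2 = 1" "d2 e3 = 0" "d2 e4 = 0"
    "d3 e1 = 0" "d3 e2 = 0" "d3 e3 = 1" "d3 e4 = 0"
    "d4 e1 = 0" "d4 e2 = 0" "d4 e3 = 0" "d4 e4 = 1"
    and ex: "\<And>x. x = d1 x *\<^sub>R e1 + d2 x *\<^sub>R e2 + d3 x *\<^sub>R e3 + d4 x *\<^sub>R e4"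
    using dual_exists[OF d I] by blast
  note D = lin_rules_real[OF dl(1)] lin_rules_real[OF dl(2)] lin_rules_real[OF dl(3)] lin_rules_real[OF dl(4)]
  note BR = lin_rules[OF B(2)] lin_rules[OF B(3)]
  have sw: "br e2 e1 = - br e1 e2" "br e3 e1 = - br e1 e3" "br e4 e1 = - br e1 e4"
    "br e3 e2 = - br e2 e3" "br e4 e2 = - br e2 e4" "br e4 e3 = - br e3 e4"
    by (rule B(5))+
  have jac: "br x (br y z) + br y (br z x) + br z (br x y) = 0" for x y z by (rule B(6))
  note H = h12 h13 h14 h23 h24 h34
  have j123: "d1 (br e1 (br e2 e3) + br e2 (br e3 e1) + br e3 (br e1 e2)) = 0"
    "d2 (br e1 (br e2 e3) + br e2 (br e3 e1) + br e3 (br e1 e2)) = 0"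
    "d4 (br e1 (br e2 e3) + br e2 (br e3 e1) + br e3 (br e1 e2)) = 0"
    using jac[of e1 e2 e3] D by simp_all
  have j124: "d1 (br e1 (br e2 e4) + br e2 (br e4 e1) + br e4 (br e1 e2)) = 0"
    "d2 (br e1 (br e2 e4) + br e2 (br e4 e1) + br e4 (br e1 e2)) = 0"
    using jac[of e1 e2 e4] D by simp_all
  have j134: "d1 (br e1 (br e3 e4) + br e3 (br e4 e1) + br e4 (br e1 e3)) = 0"
    "d2 (br e1 (br e3 e4) + br e3 (br e4 e1) + br e4 (br e1 e3)) = 0"
    using jac[of e1 e3 e4] D by simp_all
  have j234: "d1 (br e2 (br e3 e4) + br e3 (br e4 e2) + br e4 (br e2 e3)) = 0"
    using jac[of e2 e3 e4] D by simp_all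
  show "a * th1 + b * th2 = 0" using j123(3) by (simp add: sw H BR B(4) D dv algebra_simps)
  show "- (a * p1) / 2 - (b * t1) / 2 + s1 * th2 - th1 * u1 = 0" using j123(1) by (simp add: sw H BR B(4) D dv algebra_simps)
  show "- (a * p2) / 2 + (b * p1) / 2 + s1 * th1 + s2 * th2 = 0" using j123(2) by (simp add: sw H BR B(4) D dv algebra_simps)
  show "- (a * s1) / 2 - (b * u1) / 2 - p1 * th2 + t1 * th1 = 0" using j124(1) by (simp add: sw H BR B(4) D dv algebra_simps)
  show "- (a * s2) / 2 + (b * s1) / 2 - p1 * th1 - p2 * th2 = 0" using j124(2) by (simp add: sw H BR B(4) D dv algebra_simps)
  show "a * m2 + b * m1 - p2 * u1 + s2 * t1 = 0" using j134(1) by (simp add: sw H BR B(4) D dv algebra_simps)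
  show "b * m2 - p1 * s2 + p2 * s1 = 0" using j134(2) by (simp add: sw H BR B(4) D dv algebra_simps)
  show "- a * m1 + p1 * u1 - s1 * t1 = 0" using j234 by (simp add: sw H BR B(4) D dv algebra_simps)
qed

lemma good_final:
  fixes e1 :: "'a::euclidean_space"
  assumes d: "DIM('a) = 4" and g: "good J R \<sigma> e1 e2 e3 e4 lam"
  shows "distinct [e1, e2, e3, e4] \<and> independent {e1, e2, e3, e4} \<and> span {e1, e2, e3, e4} = UNIV \<and>
    J e1 = lam *\<^sub>R e1 \<and> J e2 = lam *\<^sub>R e2 \<and> J e3 = - e4 \<and> J e4 = e3 \<and>
    (\<forall>\<alpha>\<in>dual_space. R \<alpha> = \<alpha> e1 *\<^sub>R e2 - \<alpha> e2 *\<^sub>R e1) \<and>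
    (\<forall>i<4. \<forall>j<4. \<sigma> ([e1, e2, e3, e4] ! i) ([e1, e2, e3, e4] ! j) =
        (1 + lam\<^sup>2) * (if i = 0 \<and> j = 1 then 1 else if i = 1 \<and> j = 0 then -1 else 0))"
proof -
  note gg = g[unfolded good_def]
  have b: "distinct [e1, e2, e3, e4] \<and> independent {e1, e2, e3, e4} \<and> span {e1, e2, e3, e4} = UNIV"
    using basis_crit[OF d] gg by blast
  have four: "i < 4 \<Longrightarrow> i = 0 \<or> i = 1 \<or> i = 2 \<or> i = (3::nat)" for i by arith
  have s: "\<forall>i<4. \<forall>j<4. \<sigma> ([e1, e2, e3, e4] ! i) ([e1, e2, e3, e4] ! j) =
        (1 + lam\<^sup>2) * (if i = 0 \<and> j = 1 then 1 else if i = 1 \<and> j = 0 then -1 else 0)"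
  proof (intro allI impI)
    fix i j :: nat assume "i < 4" "j < 4"
    then show "\<sigma> ([e1, e2, e3, e4] ! i) ([e1, e2, e3, e4] ! j) =
        (1 + lam\<^sup>2) * (if i = 0 \<and> j = 1 then 1 else if i = 1 \<and> j = 0 then -1 else 0)"
      using four[of i] four[of j] gg by auto
  qed
  show ?thesis using b s gg by blast
qed

lemma brdet:
  assumes L: "lie_algebra br"
  shows "br (A *\<^sub>R e1 + B *\<^sub>R e2) (C *\<^sub>R e1 + D *\<^sub>R e2) = (A * D - B * C) *\<^sub>R br e1 e2"
proof -
  note Bf = lie_facts[OF L]
  have "br e2 e1 = - br e1 e2" by (rule Bf(5))
  then show ?thesis using Bf(4)
    by (simp add: lin_rules[OF Bf(2)] lin_rules[OF Bf(3)] algebra_simps)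
qed

lemma good_V:
  assumes G: "gen_complex_structure br J R \<sigma>" and g: "good J R \<sigma> e1 e2 e3 e4 lam"
    and det: "A * D - B * C = 1"
  shows "good J R \<sigma> (A *\<^sub>R e1 + B *\<^sub>R e2) (C *\<^sub>R e1 + D *\<^sub>R e2) e3 e4 lam"
  using good_change[OF G g det, of 1 0] by simp

lemma good_W:
  assumes G: "gen_complex_structure br J R \<sigma>" and g: "good J R \<sigma> e1 e2 e3 e4 lam"
    and pq: "P\<^sup>2 + Q\<^sup>2 \<noteq> 0"
  shows "good J R \<sigma> e1 e2 (P *\<^sub>R e3 + Q *\<^sub>R e4) (P *\<^sub>R e4 - Q *\<^sub>R e3) lam"
  using good_change[OF G g _ pq, of 1 1 0 0] by simp

definition U1 :: "('a::real_vector \<Rightarrow> 'a \<Rightarrow> 'a) \<Rightarrow> 'a \<Rightarrow> 'a \<Rightarrow> 'a \<Rightarrow> 'a \<Rightarrow> bool" where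
  "U1 br e1 e2 e3 e4 \<longleftrightarrow> (\<exists>y q1 q2 :: real.
        br e1 e2 = e1 \<and> br e1 e3 = 0 \<and> br e1 e4 = 0 \<and>
        br e2 e3 = (1/2) *\<^sub>R e3 - y *\<^sub>R e4 - q1 *\<^sub>R e1 \<and>
        br e2 e4 = y *\<^sub>R e3 + (1/2) *\<^sub>R e4 - q2 *\<^sub>R e1 \<and>
        br e3 e4 = 0)"

definition U2 :: "('a::real_vector \<Rightarrow> 'a \<Rightarrow> 'a) \<Rightarrow> 'a \<Rightarrow> 'a \<Rightarrow> 'a \<Rightarrow> 'a \<Rightarrow> bool" where
  "U2 br e1 e2 e3 e4 \<longleftrightarrow> (\<exists>y q1 q2 b1 b2 :: real.
        br e1 e2 = 0 \<and> br e1 e3 = 0 \<and> br e1 e4 = 0 \<and>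
        br e3 e4 = b1 *\<^sub>R e1 + b2 *\<^sub>R e2 \<and>
        br e2 e3 = - (y *\<^sub>R e4) - q1 *\<^sub>R e1 \<and>
        br e2 e4 = y *\<^sub>R e3 - q2 *\<^sub>R e1)"

definition U3 :: "('a::real_vector \<Rightarrow> 'a \<Rightarrow> 'a) \<Rightarrow> 'a \<Rightarrow> 'a \<Rightarrow> 'a \<Rightarrow> 'a \<Rightarrow> bool" where
  "U3 br e1 e2 e3 e4 \<longleftrightarrow> (\<exists>b1 b2 p q r :: real.
        br e1 e2 = 0 \<and> br e1 e3 = 0 \<and> br e2 e3 = 0 \<and>
        br e3 e4 = b1 *\<^sub>R e1 + b2 *\<^sub>R e2 \<and>
        br e4 e1 = p *\<^sub>R e1 + r *\<^sub>R e2 \<and>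
        br e4 e2 = q *\<^sub>R e1 - p *\<^sub>R e2 \<and>
        \<bar>p\<^sup>2 + q * r\<bar> \<in> {0, 1})"

lemma caseA:
  fixes br :: "'a::euclidean_space \<Rightarrow> 'a \<Rightarrow> 'a"
  assumes d: "DIM('a) = 4" and L: "lie_algebra br" and U: "unimodular br"
    and G: "gen_complex_structure br J R \<sigma>" and g: "good J R \<sigma> e1 e2 e3 e4 lam"
    and h12: "br e1 e2 = a *\<^sub>R e1 + b *\<^sub>R e2" and ab: "a \<noteq> 0 \<or> b \<noteq> 0"
  shows "\<exists>f1 f2 f3 f4. good J R \<sigma> f1 f2 f3 f4 lam \<and> U1 br f1 f2 f3 f4"
proof -
  define n where "n = a\<^sup>2 + b\<^sup>2"
  have n0: "n \<noteq> 0" using ab unfolding n_def by (simp add: add_nonneg_eq_0_iff)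
  define f1 where "f1 = a *\<^sub>R e1 + b *\<^sub>R e2"
  define f2 where "f2 = (- b / n) *\<^sub>R e1 + (a / n) *\<^sub>R e2"
  have det: "a * (a / n) - b * (- b / n) = 1"
  proof -
    have "a * (a / n) - b * (- b / n) = (a\<^sup>2 + b\<^sup>2) / n" by (simp add: add_divide_distrib power2_eq_square)
    then show ?thesis using n0 n_def by simp
  qed
  have gf: "good J R \<sigma> f1 f2 e3 e4 lam" unfolding f1_def f2_def by (rule good_V[OF G g det])
  have b12: "br f1 f2 = f1" unfolding f1_def f2_def
    by (subst brdet[OF L], subst det, subst h12) simp
  obtain a' b' p1 p2 s1 s2 th1 t1 u1 th2 m1 m2 where
    H: "br f1 f2 = a' *\<^sub>R f1 + b' *\<^sub>R f2"
    "br f1 e3 = p1 *\<^sub>R f1 + p2 *\<^sub>R f2 + (- b' / 2) *\<^sub>R e3 + th1 *\<^sub>R e4"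
    "br f1 e4 = s1 *\<^sub>R f1 + s2 *\<^sub>R f2 + (- th1) *\<^sub>R e3 + (- b' / 2) *\<^sub>R e4"
    "br f2 e3 = t1 *\<^sub>R f1 + (- p1) *\<^sub>R f2 + (a' / 2) *\<^sub>R e3 + th2 *\<^sub>R e4"
    "br f2 e4 = u1 *\<^sub>R f1 + (- s1) *\<^sub>R f2 + (- th2) *\<^sub>R e3 + (a' / 2) *\<^sub>R e4"
    "br e3 e4 = m1 *\<^sub>R f1 + m2 *\<^sub>R f2"
    using brstructure[OF d L U G gf] by blast
  have If: "indep4 f1 f2 e3 e4" using gf unfolding good_def by blast
  have "(a' - 1) *\<^sub>R f1 + b' *\<^sub>R f2 + 0 *\<^sub>R e3 + 0 *\<^sub>R e4 = 0" using H(1) b12 by (simp add: algebra_simps)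
  note z = indep4D[OF If this]
  have a1: "a' = 1" and b0: "b' = 0" using z by auto
  note Jc = jacobi_eqs[OF d L If H[unfolded a1 b0]]
  have t0: "th1 = 0" using Jc(1) by simp
  have E2: "- p1 / 2 + s1 * th2 = 0" using Jc(2) t0 by simp
  have E4: "- s1 / 2 - p1 * th2 = 0" using Jc(4) t0 by simp
  have E3: "- p2 / 2 + s2 * th2 = 0" using Jc(3) t0 by simp
  have E5: "- s2 / 2 - p2 * th2 = 0" using Jc(5) t0 by simp
  have pos: "1 + 4 * th2\<^sup>2 \<noteq> 0" by (metis add_pos_nonneg zero_less_one zero_le_power2 mult_nonneg_nonneg zero_le_numeral less_irrefl)
  have "p1 * (1 + 4 * th2\<^sup>2) = (-2) * (- p1 / 2 + s1 * th2) + (-4 * th2) * (- s1 / 2 - p1 * th2)"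
    by (simp add: algebra_simps power2_eq_square)
  also have "\<dots> = 0" by (simp only: E2 E4 mult_zero_right add_0)
  finally have P1: "p1 = 0" using pos by simp
  have S1: "s1 = 0" using E4 P1 by simp
  have "p2 * (1 + 4 * th2\<^sup>2) = (-2) * (- p2 / 2 + s2 * th2) + (-4 * th2) * (- s2 / 2 - p2 * th2)"
    by (simp add: algebra_simps power2_eq_square)
  also have "\<dots> = 0" by (simp only: E3 E5 mult_zero_right add_0)
  finally have P2: "p2 = 0" using pos by simp
  have S2: "s2 = 0" using E5 P2 by simp
  have M2: "m2 = 0" using Jc(6) P2 S2 by simp
  have M1: "m1 = 0" using Jc(8) P1 S1 by simp
  have "U1 br f1 f2 e3 e4"
    unfolding U1_def
    apply (rule exI[of _ "- th2"], rule exI[of _ "- t1"], rule exI[of _ "- u1"])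
    using b12 H a1 b0 t0 P1 P2 S1 S2 M1 M2 by (simp add: algebra_simps)
  then show ?thesis using gf by blast
qed

lemma caseB1:
  fixes br :: "'a::euclidean_space \<Rightarrow> 'a \<Rightarrow> 'a"
  assumes d: "DIM('a) = 4" and L: "lie_algebra br" and U: "unimodular br"
    and G: "gen_complex_structure br J R \<sigma>" and g: "good J R \<sigma> e1 e2 e3 e4 lam"
    and h12: "br e1 e2 = 0 *\<^sub>R e1 + 0 *\<^sub>R e2"
    and h13: "br e1 e3 = p1 *\<^sub>R e1 + p2 *\<^sub>R e2 + (- 0 / 2) *\<^sub>R e3 + th1 *\<^sub>R e4"
    and h23: "br e2 e3 = t1 *\<^sub>R e1 + (- p1) *\<^sub>R e2 + (0 / 2) *\<^sub>R e3 + th2 *\<^sub>R e4"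
    and th: "th1 \<noteq> 0 \<or> th2 \<noteq> 0"
  shows "\<exists>f1 f2 f3 f4. good J R \<sigma> f1 f2 f3 f4 lam \<and> U2 br f1 f2 f3 f4"
proof -
  note Bf = lie_facts[OF L]
  have I: "indep4 e1 e2 e3 e4" using g unfolding good_def by blast
  obtain d1 d2 d3 d4 :: "'a \<Rightarrow> real" where dl: "linear d1" "linear d2" "linear d3" "linear d4"
    and dv: "d1 e1 = 1" "d1 e2 = 0" "d1 e3 = 0" "d1 e4 = 0"
    "d2 e1 = 0" "d2 e2 = 1" "d2 e3 = 0" "d2 e4 = 0"
    "d3 e1 = 0" "d3 e2 = 0" "d3 e3 = 1" "d3 e4 = 0"
    "d4 e1 = 0" "d4 e2 = 0" "d4 e3 = 0" "d4 e4 = 1"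
    by (rule dual_exists[OF d I])
  note D4 = lin_rules_real[OF dl(4)]
  note BR = lin_rules[OF Bf(2)] lin_rules[OF Bf(3)]
  define n where "n = th1\<^sup>2 + th2\<^sup>2"
  have n0: "n \<noteq> 0" using th unfolding n_def by (simp add: add_nonneg_eq_0_iff)
  define f1 where "f1 = th2 *\<^sub>R e1 + (- th1) *\<^sub>R e2"
  define f2 where "f2 = (th1 / n) *\<^sub>R e1 + (th2 / n) *\<^sub>R e2"
  have det: "th2 * (th2 / n) - (- th1) * (th1 / n) = 1"
  proof -
    have "th2 * (th2 / n) - (- th1) * (th1 / n) = (th1\<^sup>2 + th2\<^sup>2) / n" by (simp add: add_divide_distrib power2_eq_square)
    then show ?thesis using n0 n_def by simp
  qed
  have gf: "good J R \<sigma> f1 f2 e3 e4 lam" unfolding f1_def f2_def by (rule good_V[OF G g det])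
  have b12: "br f1 f2 = 0" unfolding f1_def f2_def
    by (subst brdet[OF L], subst det, subst h12) simp
  obtain a' b' p1' p2' s1' s2' th1' t1' u1' th2' m1' m2' where
    H: "br f1 f2 = a' *\<^sub>R f1 + b' *\<^sub>R f2"
    "br f1 e3 = p1' *\<^sub>R f1 + p2' *\<^sub>R f2 + (- b' / 2) *\<^sub>R e3 + th1' *\<^sub>R e4"
    "br f1 e4 = s1' *\<^sub>R f1 + s2' *\<^sub>R f2 + (- th1') *\<^sub>R e3 + (- b' / 2) *\<^sub>R e4"
    "br f2 e3 = t1' *\<^sub>R f1 + (- p1') *\<^sub>R f2 + (a' / 2) *\<^sub>R e3 + th2' *\<^sub>R e4"
    "br f2 e4 = u1' *\<^sub>R f1 + (- s1') *\<^sub>R f2 + (- th2') *\<^sub>R e3 + (a' / 2) *\<^sub>R e4"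
    "br e3 e4 = m1' *\<^sub>R f1 + m2' *\<^sub>R f2"
    using brstructure[OF d L U G gf] by blast
  have If: "indep4 f1 f2 e3 e4" using gf unfolding good_def by blast
  have "a' *\<^sub>R f1 + b' *\<^sub>R f2 + 0 *\<^sub>R e3 + 0 *\<^sub>R e4 = 0" using H(1) b12 by simp
  note z = indep4D[OF If this]
  have a0: "a' = 0" and b0: "b' = 0" using z by auto
  have df: "d4 f1 = 0" "d4 f2 = 0" unfolding f1_def f2_def by (simp_all add: D4 dv)
  have "d4 (br f1 e3) = th2 * th1 - th1 * th2" unfolding f1_def using h13 h23
    by (simp add: BR D4 dv)
  moreover have "d4 (br f1 e3) = th1'" using H(2) by (simp add: D4 dv df)
  ultimately have t10: "th1' = 0" by simp
  have "d4 (br f2 e3) = (th1 / n) * th1 + (th2 / n) * th2" unfolding f2_def using h13 h23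
    by (simp add: BR D4 dv)
  also have "\<dots> = 1" using n0 n_def by (simp add: add_divide_distrib[symmetric] power2_eq_square)
  finally have t21: "th2' = 1" using H(4) by (simp add: D4 dv df)
  note Jc = jacobi_eqs[OF d L If H[unfolded a0 b0 t10 t21]]
  have S1: "s1' = 0" using Jc(2) by simp
  have S2: "s2' = 0" using Jc(3) S1 by simp
  have P1: "p1' = 0" using Jc(4) by simp
  have P2: "p2' = 0" using Jc(5) P1 by simp
  have "U2 br f1 f2 e3 e4"
    unfolding U2_def
    apply (rule exI[of _ "- 1"], rule exI[of _ "- t1'"], rule exI[of _ "- u1'"],
           rule exI[of _ "m1'"], rule exI[of _ "m2'"])
    using b12 H a0 b0 t10 t21 P1 P2 S1 S2 by (simp add: algebra_simps)
  then show ?thesis using gf by blast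
qed

lemma PQ_exists:
  fixes p1 p2 t1 s1 s2 u1 :: real
  assumes r6: "p2 * u1 = s2 * t1" and r7: "p1 * s2 = p2 * s1" and r8: "p1 * u1 = s1 * t1"
  shows "\<exists>P Q. P\<^sup>2 + Q\<^sup>2 \<noteq> 0 \<and> P * p1 + Q * s1 = 0 \<and> P * p2 + Q * s2 = 0 \<and> P * t1 + Q * u1 = 0"
proof (cases "s1 \<noteq> 0 \<or> p1 \<noteq> 0")
  case True
  then have "s1\<^sup>2 + (- p1)\<^sup>2 \<noteq> 0" by (simp add: add_nonneg_eq_0_iff)
  moreover have "s1 * p1 + (- p1) * s1 = 0" "s1 * p2 + (- p1) * s2 = 0" "s1 * t1 + (- p1) * u1 = 0"
    using r7 r8 by (simp_all add: algebra_simps)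
  ultimately show ?thesis by blast
next
  case F1: False
  show ?thesis
  proof (cases "s2 \<noteq> 0 \<or> p2 \<noteq> 0")
    case True
    then have "s2\<^sup>2 + (- p2)\<^sup>2 \<noteq> 0" by (simp add: add_nonneg_eq_0_iff)
    moreover have "s2 * p1 + (- p2) * s1 = 0" "s2 * p2 + (- p2) * s2 = 0" "s2 * t1 + (- p2) * u1 = 0"
      using r6 F1 by (simp_all add: algebra_simps)
    ultimately show ?thesis by blast
  next
    case F2: False
    show ?thesis
    proof (cases "u1 \<noteq> 0 \<or> t1 \<noteq> 0")
      case True
      then have "u1\<^sup>2 + (- t1)\<^sup>2 \<noteq> 0" by (simp add: add_nonneg_eq_0_iff)
      moreover have "u1 * p1 + (- t1) * s1 = 0" "u1 * p2 + (- t1) * s2 = 0" "u1 * t1 + (- t1) * u1 = 0"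
        using F1 F2 by (simp_all add: algebra_simps)
      ultimately show ?thesis by blast
    next
      case False
      then have "(1::real)\<^sup>2 + 0\<^sup>2 \<noteq> 0" "1 * p1 + 0 * s1 = 0" "1 * p2 + 0 * s2 = 0" "1 * t1 + 0 * u1 = 0"
        using F1 F2 by simp_all
      then show ?thesis by blast
    qed
  qed
qed

lemma caseB2:
  fixes br :: "'a::euclidean_space \<Rightarrow> 'a \<Rightarrow> 'a"
  assumes d: "DIM('a) = 4" and L: "lie_algebra br"
    and G: "gen_complex_structure br J R \<sigma>" and g: "good J R \<sigma> e1 e2 e3 e4 lam"
    and h12: "br e1 e2 = 0 *\<^sub>R e1 + 0 *\<^sub>R e2"
    and h13: "br e1 e3 = p1 *\<^sub>R e1 + p2 *\<^sub>R e2 + (- 0 / 2) *\<^sub>R e3 + 0 *\<^sub>R e4"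
    and h14: "br e1 e4 = s1 *\<^sub>R e1 + s2 *\<^sub>R e2 + (- 0) *\<^sub>R e3 + (- 0 / 2) *\<^sub>R e4"
    and h23: "br e2 e3 = t1 *\<^sub>R e1 + (- p1) *\<^sub>R e2 + (0 / 2) *\<^sub>R e3 + 0 *\<^sub>R e4"
    and h24: "br e2 e4 = u1 *\<^sub>R e1 + (- s1) *\<^sub>R e2 + (- 0) *\<^sub>R e3 + (0 / 2) *\<^sub>R e4"
    and h34: "br e3 e4 = m1 *\<^sub>R e1 + m2 *\<^sub>R e2"
  shows "\<exists>f1 f2 f3 f4. good J R \<sigma> f1 f2 f3 f4 lam \<and> U3 br f1 f2 f3 f4"
proof -
  note Bf = lie_facts[OF L]
  note BR = lin_rules[OF Bf(2)] lin_rules[OF Bf(3)]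
  have I: "indep4 e1 e2 e3 e4" using g unfolding good_def by blast
  note Jc = jacobi_eqs[OF d L I h12 h13 h14 h23 h24 h34]
  have r6: "p2 * u1 = s2 * t1" using Jc(6) by simp
  have r7: "p1 * s2 = p2 * s1" using Jc(7) by simp
  have r8: "p1 * u1 = s1 * t1" using Jc(8) by simp
  obtain P Q where PQ: "P\<^sup>2 + Q\<^sup>2 \<noteq> 0" "P * p1 + Q * s1 = 0" "P * p2 + Q * s2 = 0" "P * t1 + Q * u1 = 0"
    using PQ_exists[OF r6 r7 r8] by blast
  define p0 where "p0 = Q * p1 - P * s1"
  define q0 where "q0 = Q * t1 - P * u1"
  define r0 where "r0 = Q * p2 - P * s2"
  define K where "K = p0\<^sup>2 + q0 * r0"
  define t where "t = (if K = 0 then 1 else 1 / sqrt \<bar>K\<bar>)"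
  have t0: "t \<noteq> 0" unfolding t_def by simp
  have tK: "\<bar>t\<^sup>2 * K\<bar> \<in> {0, 1}"
  proof (cases "K = 0")
    case True then show ?thesis by simp
  next
    case False
    then have "t\<^sup>2 = 1 / \<bar>K\<bar>" unfolding t_def by (simp add: power_divide)
    then have "\<bar>t\<^sup>2 * K\<bar> = 1" using False by (simp add: abs_mult)
    then show ?thesis by simp
  qed
  have pq': "(t * P)\<^sup>2 + (t * Q)\<^sup>2 \<noteq> 0" using PQ(1) t0
    by (simp add: power_mult_distrib distrib_left[symmetric])
  have gf: "good J R \<sigma> e1 e2 ((t * P) *\<^sub>R e3 + (t * Q) *\<^sub>R e4) ((t * P) *\<^sub>R e4 - (t * Q) *\<^sub>R e3) lam"
    by (rule good_W[OF G g pq'])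
  have sw: "br e2 e1 = - br e1 e2" "br e3 e1 = - br e1 e3" "br e4 e1 = - br e1 e4"
    "br e3 e2 = - br e2 e3" "br e4 e2 = - br e2 e4" "br e4 e3 = - br e3 e4"
    by (rule Bf(5))+
  define f3 where "f3 = (t * P) *\<^sub>R e3 + (t * Q) *\<^sub>R e4"
  define f4 where "f4 = (t * P) *\<^sub>R e4 - (t * Q) *\<^sub>R e3"
  have b12: "br e1 e2 = 0" using h12 by simp
  have "br e1 f3 = (t * (P * p1 + Q * s1)) *\<^sub>R e1 + (t * (P * p2 + Q * s2)) *\<^sub>R e2"
    unfolding f3_def by (simp add: h13 h14 BR algebra_simps)
  then have b13: "br e1 f3 = 0" using PQ by simp
  have "br e2 f3 = (t * (P * t1 + Q * u1)) *\<^sub>R e1 - (t * (P * p1 + Q * s1)) *\<^sub>R e2"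
    unfolding f3_def by (simp add: h23 h24 BR algebra_simps)
  then have b23: "br e2 f3 = 0" using PQ by simp
  have b34: "br f3 f4 = (((t * P)\<^sup>2 + (t * Q)\<^sup>2) * m1) *\<^sub>R e1 + (((t * P)\<^sup>2 + (t * Q)\<^sup>2) * m2) *\<^sub>R e2"
    unfolding f3_def f4_def
    by (simp add: h34 sw(6) Bf(4) BR algebra_simps power2_eq_square)
  have b41: "br f4 e1 = (t * p0) *\<^sub>R e1 + (t * r0) *\<^sub>R e2"
    unfolding f4_def p0_def r0_def
    by (simp add: h13 h14 sw(2) sw(3) BR algebra_simps)
  have b42: "br f4 e2 = (t * q0) *\<^sub>R e1 - (t * p0) *\<^sub>R e2"
    unfolding f4_def p0_def q0_def
    by (simp add: h23 h24 sw(4) sw(5) BR algebra_simps)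
  have "(t * p0)\<^sup>2 + (t * q0) * (t * r0) = t\<^sup>2 * K" unfolding K_def by (simp add: algebra_simps power2_eq_square)
  then have Kc: "\<bar>(t * p0)\<^sup>2 + (t * q0) * (t * r0)\<bar> \<in> {0, 1}" using tK by simp
  have "U3 br e1 e2 f3 f4"
    unfolding U3_def
    using b12 b13 b23 b34 b41 b42 Kc by blast
  then show ?thesis using gf f3_def f4_def by blast
qed

theorem theorem2p1:
  fixes br :: "'a::euclidean_space \<Rightarrow> 'a \<Rightarrow> 'a"
    and J :: "'a \<Rightarrow> 'a" and R :: "('a \<Rightarrow> real) \<Rightarrow> 'a" and \<sigma> :: "'a \<Rightarrow> ('a \<Rightarrow> real)"
  assumes "DIM('a) = 4"
    and "lie_algebra br"
    and "unimodular br"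
    and "gen_complex_structure br J R \<sigma>"
    and "rank_R R = 2"
  shows "\<exists>e1 e2 e3 e4 (lam::real).
    distinct [e1, e2, e3, e4] \<and> independent {e1, e2, e3, e4} \<and> span {e1, e2, e3, e4} = UNIV \<and>
    J e1 = lam *\<^sub>R e1 \<and> J e2 = lam *\<^sub>R e2 \<and> J e3 = - e4 \<and> J e4 = e3 \<and>
    (\<forall>\<alpha>\<in>dual_space. R \<alpha> = \<alpha> e1 *\<^sub>R e2 - \<alpha> e2 *\<^sub>R e1) \<and>
    (\<forall>i<4. \<forall>j<4. \<sigma> ([e1, e2, e3, e4] ! i) ([e1, e2, e3, e4] ! j) =
        (1 + lam\<^sup>2) * (if i = 0 \<and> j = 1 then 1 else if i = 1 \<and> j = 0 then -1 else 0)) \<and>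
    ((\<exists>y q1 q2 :: real.
        br e1 e2 = e1 \<and> br e1 e3 = 0 \<and> br e1 e4 = 0 \<and>
        br e2 e3 = (1/2) *\<^sub>R e3 - y *\<^sub>R e4 - q1 *\<^sub>R e1 \<and>
        br e2 e4 = y *\<^sub>R e3 + (1/2) *\<^sub>R e4 - q2 *\<^sub>R e1 \<and>
        br e3 e4 = 0)
     \<or> (\<exists>y q1 q2 b1 b2 :: real.
        br e1 e2 = 0 \<and> br e1 e3 = 0 \<and> br e1 e4 = 0 \<and>
        br e3 e4 = b1 *\<^sub>R e1 + b2 *\<^sub>R e2 \<and>
        br e2 e3 = - (y *\<^sub>R e4) - q1 *\<^sub>R e1 \<and>
        br e2 e4 = y *\<^sub>R e3 - q2 *\<^sub>R e1)
     \<or> (\<exists>b1 b2 p q r :: real.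
        br e1 e2 = 0 \<and> br e1 e3 = 0 \<and> br e2 e3 = 0 \<and>
        br e3 e4 = b1 *\<^sub>R e1 + b2 *\<^sub>R e2 \<and>
        br e4 e1 = p *\<^sub>R e1 + r *\<^sub>R e2 \<and>
        br e4 e2 = q *\<^sub>R e1 - p *\<^sub>R e2 \<and>
        \<bar>p\<^sup>2 + q * r\<bar> \<in> {0, 1}))"
proof -
  obtain e1 e2 e3 e4 lam where g: "good J R \<sigma> e1 e2 e3 e4 lam"
    using good_exists[OF assms(1) assms(4) assms(5)] by blast
  obtain a b p1 p2 s1 s2 th1 t1 u1 th2 m1 m2 where
    H: "br e1 e2 = a *\<^sub>R e1 + b *\<^sub>R e2"
    "br e1 e3 = p1 *\<^sub>R e1 + p2 *\<^sub>R e2 + (- b / 2) *\<^sub>R e3 + th1 *\<^sub>R e4"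
    "br e1 e4 = s1 *\<^sub>R e1 + s2 *\<^sub>R e2 + (- th1) *\<^sub>R e3 + (- b / 2) *\<^sub>R e4"
    "br e2 e3 = t1 *\<^sub>R e1 + (- p1) *\<^sub>R e2 + (a / 2) *\<^sub>R e3 + th2 *\<^sub>R e4"
    "br e2 e4 = u1 *\<^sub>R e1 + (- s1) *\<^sub>R e2 + (- th2) *\<^sub>R e3 + (a / 2) *\<^sub>R e4"
    "br e3 e4 = m1 *\<^sub>R e1 + m2 *\<^sub>R e2"
    using brstructure[OF assms(1) assms(2) assms(3) assms(4) g] by blast
  have main: "\<exists>f1 f2 f3 f4. good J R \<sigma> f1 f2 f3 f4 lam \<and>
      (U1 br f1 f2 f3 f4 \<or> U2 br f1 f2 f3 f4 \<or> U3 br f1 f2 f3 f4)"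
  proof (cases "a \<noteq> 0 \<or> b \<noteq> 0")
    case True
    then show ?thesis using caseA[OF assms(1) assms(2) assms(3) assms(4) g H(1)] by blast
  next
    case False
    then have a0: "a = 0" and b0: "b = 0" by auto
    show ?thesis
    proof (cases "th1 \<noteq> 0 \<or> th2 \<noteq> 0")
      case True
      have h12: "br e1 e2 = 0 *\<^sub>R e1 + 0 *\<^sub>R e2" using H(1) a0 b0 by simp
      have h13: "br e1 e3 = p1 *\<^sub>R e1 + p2 *\<^sub>R e2 + (- 0 / 2) *\<^sub>R e3 + th1 *\<^sub>R e4" using H(2) b0 by simp
      have h23: "br e2 e3 = t1 *\<^sub>R e1 + (- p1) *\<^sub>R e2 + (0 / 2) *\<^sub>R e3 + th2 *\<^sub>R e4" using H(4) a0 by simp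
      show ?thesis using caseB1[OF assms(1) assms(2) assms(3) assms(4) g h12 h13 h23 True] by blast
    next
      case False
      then have t1z: "th1 = 0" and t2z: "th2 = 0" by auto
      show ?thesis using caseB2[OF assms(1) assms(2) assms(4) g H[unfolded a0 b0 t1z t2z]] by blast
    qed
  qed
  then obtain f1 f2 f3 f4 where gf: "good J R \<sigma> f1 f2 f3 f4 lam"
    and U: "U1 br f1 f2 f3 f4 \<or> U2 br f1 f2 f3 f4 \<or> U3 br f1 f2 f3 f4" by blast
  note fin = good_final[OF assms(1) gf]
  show ?thesis
    apply (rule exI[of _ f1], rule exI[of _ f2], rule exI[of _ f3], rule exI[of _ f4], rule exI[of _ lam])
    using fin U unfolding U1_def U2_def U3_def by blast
qed

end
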